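(* Let $G=(V,E)$ be a Generalized Bartlett graph with $|V|=p$, and let $\sigma$ be a Generalized Bartlett ordering for $G$. Suppose $\Omega\in\mathbb{P}_{G_\sigma}$ follows a generalized $G$-Wishart distribution with parameters $U$ and $\boldsymbol\delta$, where $U$ is positive definite and $\delta_i>0$ for all $i$. Let $\Omega=LDL^T$ be the modified Cholesky decomposition and define $\widetilde D_1=D_1$, $\widetilde D_k=D_k/D_{k-1}$ for $k\ge2$. Then (i) for every independent entry $L_{ij}$ ($i>j$, $(i,j)\in E_\sigma$), the conditional distribution of $L_{ij}$ given all other entries of $L_I$ and $\widetilde D=(\widetilde D_1,\dots,\widetilde D_p)$ is univariate normal; (ii) for every $k$, the conditional distribution of $\widetilde D_k$ given $L_I$ and $\{\widetilde D_{k'}\}_{k'\neq k}$ is either a Generalized Inverse Gaussian or a Gamma distribution.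
   Context: For an undirected graph $G=(V,E)$ with $|V|=p$ and an ordering $\sigma$ (a bijection $V\to\{1,\dots,p\}$), the ordered graph $G_\sigma$ has vertex set $\{1,\dots,p\}$ and edge set $E_\sigma=\{(i,j):(\sigma^{-1}(i),\sigma^{-1}(j))\in E\}$. $\mathbb{P}_{G_\sigma}$ is the set of $p\times p$ symmetric positive definite $\Omega$ with $\Omega_{ij}=0$ for $i\ne j$, $(i,j)\notin E_\sigma$. Modified Cholesky: $\Omega=LDL^T$, $L$ unit lower triangular, $D=\mathrm{diag}(D_1,\dots,D_p)$, $D_i>0$. $L_I=\{L_{ij}:i>j,(i,j)\in E_\sigma\}$; $\Omega\mapsto(L_I,D)$ is a bijection $\mathbb{P}_{G_\sigma}\to\mathbb{R}^{|L_I|}\times(0,\infty)^p$. The generalized $G$-Wishart distribution with parameters $U,\boldsymbol\delta$ has density on $\mathbb{P}_{G_\sigma}$ proportional to $\prod_i D_i^{\delta_i/2}\exp(-\tfrac12\mathrm{tr}(\Omega U))$ (Lebesgue measure on free entries of $\Omega$). Triangulation: given $\sigma$, set $E^\sigma_0=E$ and for $i=1,\dots,p-2$ let $E^\sigma_i=E^\sigma_{i-1}\cup\{\{u,v\}: u\ne v,\ \sigma(u)>i,\ \sigma(v)>i,\ \{u,\sigma^{-1}(i)\}\in E^\sigma_{i-1},\ \{v,\sigma^{-1}(i)\}\in E^\sigma_{i-1}\}$; put $D^\sigma(E)=E^\sigma_{p-2}$. $G$ is a Generalized Bartlett graph if there is an ordering $\sigma$ (a Generalized Bartlett ordering) such that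 there are no vertices $u,v,w$ with $\{u,v\},\{v,w\},\{u,w\}\notin E$ but $\{u,v\},\{v,w\},\{u,w\}\in D^\sigma(E)$. A Generalized Inverse Gaussian distribution on $(0,\infty)$ has density proportional to $x^{\alpha}\exp(-a x-b/x)$ with $a,b>0$. *)

theory Defs
  imports "HOL-Probability.Probability"
begin

definition simple_graph :: "'a set \<Rightarrow> 'a set set \<Rightarrow> bool" where
  "simple_graph V E \<longleftrightarrow> finite V \<and> E \<subseteq> {{u, v} | u v. u \<in> V \<and> v \<in> V \<and> u \<noteq> v}"

definition is_ordering :: "'a set \<Rightarrow> ('a \<Rightarrow> nat) \<Rightarrow> bool" where
  "is_ordering V \<sigma> \<longleftrightarrow> bij_betw \<sigma> V {1..card V}"

fun fill_edges :: "'a set \<Rightarrow> 'a set set \<Rightarrow> ('a \<Rightarrow> nat) \<Rightarrow> nat \<Rightarrow> 'a set set" where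
  "fill_edges V E \<sigma> 0 = E"
| "fill_edges V E \<sigma> (Suc i) =
     fill_edges V E \<sigma> i \<union>
     {{u, v} | u v. u \<noteq> v \<and> u \<in> V \<and> v \<in> V \<and> \<sigma> u > Suc i \<and> \<sigma> v > Suc i \<and>
        {u, inv_into V \<sigma> (Suc i)} \<in> fill_edges V E \<sigma> i \<and>
        {v, inv_into V \<sigma> (Suc i)} \<in> fill_edges V E \<sigma> i}"

definition triangulation :: "'a set \<Rightarrow> 'a set set \<Rightarrow> ('a \<Rightarrow> nat) \<Rightarrow> 'a set set" where
  "triangulation V E \<sigma> = fill_edges V E \<sigma> (card V - 2)"

definition GB_ordering :: "'a set \<Rightarrow> 'a set set \<Rightarrow> ('a \<Rightarrow> nat) \<Rightarrow> bool" where
  "GB_ordering V E \<sigma> \<longleftrightarrow> is_ordering V \<sigma> \<and>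
     \<not> (\<exists>u v w. {u, v} \<notin> E \<and> {v, w} \<notin> E \<and> {u, w} \<notin> E \<and>
        {u, v} \<in> triangulation V E \<sigma> \<and> {v, w} \<in> triangulation V E \<sigma> \<and>
        {u, w} \<in> triangulation V E \<sigma>)"

definition GB_graph :: "'a set \<Rightarrow> 'a set set \<Rightarrow> bool" where
  "GB_graph V E \<longleftrightarrow> (\<exists>\<sigma>. GB_ordering V E \<sigma>)"

definition ord_edge :: "'a set \<Rightarrow> 'a set set \<Rightarrow> ('a \<Rightarrow> nat) \<Rightarrow> nat \<Rightarrow> nat \<Rightarrow> bool" where
  "ord_edge V E \<sigma> i j \<longleftrightarrow> {inv_into V \<sigma> i, inv_into V \<sigma> j} \<in> E"

text \<open>Indices of the free entries of Omega in P_{G_sigma} (lower triangle incl. diagonal).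
  The same index set indexes (L_I, D~): off-diagonal entries are L_I, diagonal ones D~.\<close>
definition free_idx :: "'a set \<Rightarrow> 'a set set \<Rightarrow> ('a \<Rightarrow> nat) \<Rightarrow> (nat \<times> nat) set" where
  "free_idx V E \<sigma> = {(i, j). i \<in> {1..card V} \<and> j \<in> {1..card V} \<and> j \<le> i \<and>
                            (i = j \<or> ord_edge V E \<sigma> i j)}"

definition omega_of :: "'a set \<Rightarrow> 'a set set \<Rightarrow> ('a \<Rightarrow> nat) \<Rightarrow> (nat \<times> nat \<Rightarrow> real) \<Rightarrow> nat \<Rightarrow> nat \<Rightarrow> real" where
  "omega_of V E \<sigma> x i j =
     (if (max i j, min i j) \<in> free_idx V E \<sigma> then x (max i j, min i j) else 0)"

definition sym_pd :: "nat \<Rightarrow> (nat \<Rightarrow> nat \<Rightarrow> real) \<Rightarrow> bool" where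
  "sym_pd p A \<longleftrightarrow> (\<forall>i\<in>{1..p}. \<forall>j\<in>{1..p}. A i j = A j i) \<and>
     (\<forall>v::nat \<Rightarrow> real. (\<exists>i\<in>{1..p}. v i \<noteq> 0) \<longrightarrow>
        (\<Sum>i=1..p. \<Sum>j=1..p. v i * A i j * v j) > 0)"

definition is_mod_chol :: "nat \<Rightarrow> (nat \<Rightarrow> nat \<Rightarrow> real) \<Rightarrow> (nat \<Rightarrow> nat \<Rightarrow> real) \<Rightarrow> (nat \<Rightarrow> real) \<Rightarrow> bool" where
  "is_mod_chol p \<Omega> L D \<longleftrightarrow>
     (\<forall>i\<in>{1..p}. L i i = 1) \<and>
     (\<forall>i\<in>{1..p}. \<forall>j\<in>{1..p}. i < j \<longrightarrow> L i j = 0) \<and>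
     (\<forall>i j. i \<notin> {1..p} \<or> j \<notin> {1..p} \<longrightarrow> L i j = 0) \<and>
     (\<forall>k\<in>{1..p}. D k > 0) \<and> (\<forall>k. k \<notin> {1..p} \<longrightarrow> D k = 0) \<and>
     (\<forall>i\<in>{1..p}. \<forall>j\<in>{1..p}. \<Omega> i j = (\<Sum>k=1..p. L i k * D k * L j k))"

definition chol_L :: "nat \<Rightarrow> (nat \<Rightarrow> nat \<Rightarrow> real) \<Rightarrow> nat \<Rightarrow> nat \<Rightarrow> real" where
  "chol_L p \<Omega> = fst (THE (L, D). is_mod_chol p \<Omega> L D)"

definition chol_D :: "nat \<Rightarrow> (nat \<Rightarrow> nat \<Rightarrow> real) \<Rightarrow> nat \<Rightarrow> real" where
  "chol_D p \<Omega> = snd (THE (L, D). is_mod_chol p \<Omega> L D)"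

definition Dtilde :: "(nat \<Rightarrow> real) \<Rightarrow> nat \<Rightarrow> real" where
  "Dtilde D k = (if k = 1 then D 1 else D k / D (k - 1))"

definition free_lebesgue :: "'a set \<Rightarrow> 'a set set \<Rightarrow> ('a \<Rightarrow> nat) \<Rightarrow> (nat \<times> nat \<Rightarrow> real) measure" where
  "free_lebesgue V E \<sigma> = PiM (free_idx V E \<sigma>) (\<lambda>_. lborel)"

definition gw_unnorm :: "'a set \<Rightarrow> 'a set set \<Rightarrow> ('a \<Rightarrow> nat) \<Rightarrow> (nat \<Rightarrow> nat \<Rightarrow> real) \<Rightarrow> (nat \<Rightarrow> real)
    \<Rightarrow> (nat \<times> nat \<Rightarrow> real) \<Rightarrow> real" where
  "gw_unnorm V E \<sigma> U \<delta> x =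
     (let p = card V; \<Omega> = omega_of V E \<sigma> x; D = chol_D p \<Omega> in
      if sym_pd p \<Omega> then
        (\<Prod>k=1..p. D k powr (\<delta> k / 2)) * exp (- (1/2) * (\<Sum>i=1..p. \<Sum>j=1..p. \<Omega> i j * U j i))
      else 0)"

definition gen_G_wishart :: "'a set \<Rightarrow> 'a set set \<Rightarrow> ('a \<Rightarrow> nat) \<Rightarrow> (nat \<Rightarrow> nat \<Rightarrow> real) \<Rightarrow> (nat \<Rightarrow> real)
    \<Rightarrow> (nat \<times> nat \<Rightarrow> real) measure" where
  "gen_G_wishart V E \<sigma> U \<delta> =
     density (free_lebesgue V E \<sigma>)
       (\<lambda>x. ennreal (gw_unnorm V E \<sigma> U \<delta> x) /
             (\<integral>\<^sup>+ y. ennreal (gw_unnorm V E \<sigma> U \<delta> y) \<partial>free_lebesgue V E \<sigma>))"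

definition LD_coords :: "'a set \<Rightarrow> 'a set set \<Rightarrow> ('a \<Rightarrow> nat) \<Rightarrow> (nat \<times> nat \<Rightarrow> real) \<Rightarrow> nat \<times> nat \<Rightarrow> real" where
  "LD_coords V E \<sigma> x =
     (let p = card V; \<Omega> = omega_of V E \<sigma> x in
      restrict (\<lambda>(i, j). if j < i then chol_L p \<Omega> i j else Dtilde (chol_D p \<Omega>) i)
               (free_idx V E \<sigma>))"

end

theory Submission
  imports Defs
begin

definition ult :: "nat \<Rightarrow> (nat\<Rightarrow>nat\<Rightarrow>real) \<Rightarrow> bool" where
 "ult n L \<longleftrightarrow> (\<forall>i\<in>{1..n}. L i i = 1) \<and> (\<forall>i\<in>{1..n}. \<forall>j\<in>{1..n}. i < j \<longrightarrow> L i j = 0)"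

lemma ult_mono: "ult n L \<Longrightarrow> c \<le> n \<Longrightarrow> ult c L"
  unfolding ult_def by auto

lemma qf_identity:
  fixes A L :: "nat \<Rightarrow> nat \<Rightarrow> real" and D v :: "nat \<Rightarrow> real"
  assumes "\<forall>a\<in>{1..n}. \<forall>b\<in>{1..n}. A a b = (\<Sum>k=1..n. L a k * D k * L b k)"
  shows "(\<Sum>a=1..n. \<Sum>b=1..n. v a * A a b * v b) = (\<Sum>k=1..n. D k * (\<Sum>a=1..n. L a k * v a)^2)"
proof -
  have "(\<Sum>a=1..n. \<Sum>b=1..n. v a * A a b * v b) = (\<Sum>a=1..n. \<Sum>b=1..n. \<Sum>k=1..n. D k * (L a k * v a) * (L b k * v b))"
    using assms by (auto intro!: sum.cong simp: sum_distrib_left sum_distrib_right mult_ac)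
  also have "\<dots> = (\<Sum>a=1..n. \<Sum>k=1..n. \<Sum>b=1..n. D k * (L a k * v a) * (L b k * v b))"
    by (rule sum.cong[OF refl], rule sum.swap)
  also have "\<dots> = (\<Sum>k=1..n. \<Sum>a=1..n. \<Sum>b=1..n. D k * (L a k * v a) * (L b k * v b))"
    by (rule sum.swap)
  also have "\<dots> = (\<Sum>k=1..n. D k * (\<Sum>a=1..n. L a k * v a)^2)"
    by (simp add: power2_eq_square sum_product sum_distrib_left mult_ac)
  finally show ?thesis .
qed

lemma tri_inj:
  assumes "ult n L" and "\<forall>k\<in>{1..n}. (\<Sum>a=1..n. L a k * v a) = 0"
  shows "\<forall>a\<in>{1..n}. v a = 0"
proof (rule ccontr)
  assume nt: "\<not> (\<forall>a\<in>{1..n}. v a = 0)"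
  define S where "S = {a\<in>{1..n}. v a \<noteq> 0}"
  have S: "finite S" "S \<noteq> {}" using nt by (auto simp: S_def)
  define m where "m = Max S"
  have mS: "m \<in> S" using S by (simp add: m_def)
  have big: "\<And>a. a \<in> {1..n} \<Longrightarrow> m < a \<Longrightarrow> v a = 0"
    using S by (metis (mono_tags, lifting) Max_ge S_def leD m_def mem_Collect_eq)
  have "(\<Sum>a=1..n. L a m * v a) = (\<Sum>a\<in>{m}. L a m * v a)"
  proof (rule sum.mono_neutral_right)
    show "{m} \<subseteq> {1..n}" using mS by (auto simp: S_def)
    show "\<forall>i\<in>{1..n} - {m}. L i m * v i = 0"
    proof
      fix i assume i: "i \<in> {1..n} - {m}"
      show "L i m * v i = 0"
      proof (cases "i < m")
        case True then show ?thesis using assms(1) i mS by (auto simp: ult_def S_def)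
      next
        case False then show ?thesis using big i by auto
      qed
    qed
  qed simp
  also have "\<dots> = v m" using assms(1) mS by (auto simp: ult_def S_def)
  finally have "v m = 0" using assms(2) mS by (auto simp: S_def)
  then show False using mS by (auto simp: S_def)
qed

lemma tri_solve:
  assumes "ult n L" "c \<le> n"
  shows "\<exists>v. (\<forall>a. c < a \<or> a = 0 \<longrightarrow> v a = 0) \<and> (\<forall>k\<in>{1..c}. (\<Sum>a=1..c. L a k * v a) = r k)"
  using assms(2)
proof (induction c arbitrary: r)
  case 0 then show ?case by (intro exI[of _ "\<lambda>_. 0"]) auto
next
  case (Suc c)
  define r' where "r' k = r k - L (Suc c) k * r (Suc c)" for k
  obtain v where v: "\<forall>a. c < a \<or> a = 0 \<longrightarrow> v a = 0" "\<forall>k\<in>{1..c}. (\<Sum>a=1..c. L a k * v a) = r' k"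
    using Suc by (metis Suc_leD)
  define v' where "v' = v(Suc c := r (Suc c))"
  have "\<forall>k\<in>{1..Suc c}. (\<Sum>a=1..Suc c. L a k * v' a) = r k"
  proof
    fix k assume k: "k \<in> {1..Suc c}"
    have "(\<Sum>a=1..Suc c. L a k * v' a) = (\<Sum>a=1..c. L a k * v a) + L (Suc c) k * r (Suc c)"
      by (simp add: v'_def)
    also have "\<dots> = r k"
    proof (cases "k = Suc c")
      case True
      have "(\<Sum>a=1..c. L a k * v a) = 0"
        using assms(1) Suc.prems True by (auto intro!: sum.neutral simp: ult_def)
      moreover have "L (Suc c) k = 1" using assms(1) Suc.prems True by (auto simp: ult_def)
      ultimately show ?thesis using True by simp
    next
      case False
      then have "k \<in> {1..c}" using k by auto
      then show ?thesis using v(2) by (simp add: r'_def)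
    qed
    finally show "(\<Sum>a=1..Suc c. L a k * v' a) = r k" .
  qed
  moreover have "\<forall>a. Suc c < a \<or> a = 0 \<longrightarrow> v' a = 0" using v(1) by (auto simp: v'_def)
  ultimately show ?case by blast
qed

definition quad :: "nat \<Rightarrow> (nat \<Rightarrow> nat \<Rightarrow> real) \<Rightarrow> (nat \<Rightarrow> real) \<Rightarrow> real" where
  "quad n A v = (\<Sum>i=1..n. \<Sum>j=1..n. v i * A i j * v j)"

lemma ldl_pd:
  assumes "ult n L" "\<forall>a\<in>{1..n}. \<forall>b\<in>{1..n}. A a b = (\<Sum>k=1..n. L a k * D k * L b k)"
    "\<forall>k\<in>{1..n}. D k > 0" "\<exists>i\<in>{1..n}. v i \<noteq> 0"
  shows "quad n A v > 0"
proof -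
  have q: "quad n A v = (\<Sum>k=1..n. D k * (\<Sum>a=1..n. L a k * v a)^2)"
    unfolding quad_def by (rule qf_identity[OF assms(2)])
  have nn: "\<forall>k\<in>{1..n}. 0 \<le> D k * (\<Sum>a=1..n. L a k * v a)^2"
    using assms(3) by (simp add: less_imp_le)
  have "quad n A v \<noteq> 0"
  proof
    assume "quad n A v = 0"
    then have "\<forall>k\<in>{1..n}. D k * (\<Sum>a=1..n. L a k * v a)^2 = 0"
      using sum_nonneg_eq_0_iff[of "{1..n}" "\<lambda>k. D k * (\<Sum>a=1..n. L a k * v a)^2"] q nn by auto
    then have "\<forall>k\<in>{1..n}. (\<Sum>a=1..n. L a k * v a) = 0"
      using assms(3) by force
    then show False using tri_inj[OF assms(1)] assms(4) by blast
  qed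
  moreover have "quad n A v \<ge> 0" unfolding q by (rule sum_nonneg) (use nn in blast)
  ultimately show ?thesis by simp
qed

lemma sym_pd_quad: "sym_pd n A \<Longrightarrow> (\<exists>i\<in>{1..n}. v i \<noteq> 0) \<Longrightarrow> quad n A v > 0"
  unfolding sym_pd_def quad_def by blast

lemma pd_block_pos:
  assumes pd: "\<forall>v. (\<exists>i\<in>{1..n}. v i \<noteq> 0) \<longrightarrow> quad n A v > 0"
    and L: "ult n L" and c: "c \<in> {1..n}"
    and blk: "\<forall>a\<in>{1..c}. \<forall>b\<in>{1..c}. A a b = (\<Sum>k=1..c. L a k * D k * L b k)"
  shows "D c > 0"
proof -
  obtain v where v: "\<forall>a. c < a \<or> a = 0 \<longrightarrow> v a = 0"
    "\<forall>k\<in>{1..c}. (\<Sum>a=1..c. L a k * v a) = (if k = c then 1 else 0)"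
    using tri_solve[OF L, of c "\<lambda>k. if k = c then 1 else 0"] c by auto
  have Lc: "ult c L" using ult_mono[OF L] c by auto
  have "(\<Sum>a=1..c. L a c * v a) = (\<Sum>a\<in>{c}. L a c * v a)"
    by (rule sum.mono_neutral_right) (use Lc c in \<open>auto simp: ult_def\<close>)
  then have vc: "v c = 1" using v(2) c Lc by (auto simp: ult_def)
  have "quad n A v = quad c A v"
  proof -
    have "quad n A v = (\<Sum>a=1..c. \<Sum>b=1..n. v a * A a b * v b)"
      unfolding quad_def by (rule sum.mono_neutral_right) (use c v(1) in auto)
    also have "\<dots> = quad c A v"
      unfolding quad_def
      by (rule sum.cong[OF refl], rule sum.mono_neutral_right) (use c v(1) in auto)
    finally show ?thesis .
  qed
  also have "\<dots> = (\<Sum>k=1..c. D k * (\<Sum>a=1..c. L a k * v a)^2)"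
    unfolding quad_def by (rule qf_identity[OF blk])
  also have "\<dots> = (\<Sum>k=1..c. D k * (if k = c then 1 else 0))"
    using v(2) by (auto intro!: sum.cong)
  also have "\<dots> = D c" using c by (simp add: if_distrib sum.delta' cong: if_cong)
  finally have "quad n A v = D c" .
  moreover have "quad n A v > 0" using pd vc c by (metis one_neq_zero)
  ultimately show ?thesis by simp
qed

lemma sum_trunc:
  fixes f :: "nat \<Rightarrow> 'b::comm_monoid_add"
  assumes "m \<le> n" "\<forall>k. m < k \<longrightarrow> f k = 0"
  shows "(\<Sum>k=1..n. f k) = (\<Sum>k=1..m. f k)"
  by (rule sum.mono_neutral_right) (use assms in auto)

lemma sum_last:
  fixes f :: "nat \<Rightarrow> 'b::comm_monoid_add"
  assumes "b \<ge> 1"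
  shows "(\<Sum>k=1..b. f k) = (\<Sum>k\<in>{1..<b}. f k) + f b"
proof -
  have "{1..b} = insert b {1..<b}" using assms by auto
  then show ?thesis by (simp add: add.commute)
qed

lemma sum_split_last:
  fixes f :: "nat \<Rightarrow> 'b::comm_monoid_add"
  assumes "j \<in> {1..p}" "\<forall>k\<in>{1..p}. j < k \<longrightarrow> f k = 0"
  shows "(\<Sum>k=1..p. f k) = (\<Sum>k\<in>{1..<j}. f k) + f j"
proof -
  have "(\<Sum>k=1..p. f k) = (\<Sum>k=1..j. f k)"
    by (rule sum.mono_neutral_right) (use assms in auto)
  also have "{1..j} = insert j {1..<j}" using assms by auto
  finally show ?thesis by (simp add: add.commute)
qed

lemma mod_chol_col:
  assumes "is_mod_chol p \<Omega> L D" "j \<in> {1..p}" "i \<in> {1..p}" "j \<le> i"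
  shows "\<Omega> i j = (\<Sum>k\<in>{1..<j}. L i k * D k * L j k) + L i j * D j"
proof -
  have "\<Omega> i j = (\<Sum>k=1..p. L i k * D k * L j k)" using assms unfolding is_mod_chol_def by blast
  also have "\<dots> = (\<Sum>k\<in>{1..<j}. L i k * D k * L j k) + L i j * D j * L j j"
    by (rule sum_split_last) (use assms in \<open>auto simp: is_mod_chol_def\<close>)
  finally show ?thesis using assms by (simp add: is_mod_chol_def)
qed

lemma mod_chol_unique:
  assumes A: "is_mod_chol p \<Omega> L D" and B: "is_mod_chol p \<Omega> L' D'"
  shows "L = L' \<and> D = D'"
proof -
  have "\<forall>j'. j' \<le> j \<longrightarrow> (\<forall>i. L i j' = L' i j') \<and> D j' = D' j'" for j
  proof (induction j)
    case 0 then show ?case using A B by (auto simp: is_mod_chol_def)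
  next
    case (Suc n)
    have "(\<forall>i. L i (Suc n) = L' i (Suc n)) \<and> D (Suc n) = D' (Suc n)"
    proof (cases "Suc n \<le> p")
      case False then show ?thesis using A B by (auto simp: is_mod_chol_def)
    next
      case True
      let ?j = "Suc n"
      have j: "?j \<in> {1..p}" using True by auto
      have IH: "\<And>k i. k \<in> {1..<?j} \<Longrightarrow> L i k = L' i k \<and> D k = D' k" using Suc.IH by auto
      have dd: "D ?j = D' ?j"
        using mod_chol_col[OF A j j] mod_chol_col[OF B j j] IH j A B
        by (auto simp: is_mod_chol_def intro!: sum.cong)
      have "L i ?j = L' i ?j" for i
      proof (cases "i \<in> {1..p}")
        case False then show ?thesis using A B by (auto simp: is_mod_chol_def)
      next
        case i: True
        show ?thesis
        proof (cases "?j \<le> i")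
          case False then show ?thesis using A B i j by (auto simp: is_mod_chol_def)
        next
          case True
          have s: "(\<Sum>k\<in>{1..<?j}. L i k * D k * L ?j k) = (\<Sum>k\<in>{1..<?j}. L' i k * D' k * L' ?j k)"
            using IH by (auto intro!: sum.cong)
          have "L i ?j * D ?j = L' i ?j * D' ?j"
            using mod_chol_col[OF A j i True] mod_chol_col[OF B j i True] s by simp
          moreover have "D ?j > 0" using A j by (auto simp: is_mod_chol_def)
          ultimately show ?thesis using dd by simp
        qed
      qed
      then show ?thesis using dd by blast
    qed
    then show ?case using Suc.IH le_Suc_eq by auto
  qed
  then show ?thesis by (auto intro!: ext)
qed

lemma chol_eq:
  assumes "is_mod_chol p \<Omega> L D"
  shows "chol_L p \<Omega> = L" "chol_D p \<Omega> = D"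
proof -
  have "(THE (L, D). is_mod_chol p \<Omega> L D) = (L, D)"
    by (rule the_equality) (use assms mod_chol_unique in auto)
  then show "chol_L p \<Omega> = L" "chol_D p \<Omega> = D" by (auto simp: chol_L_def chol_D_def)
qed

lemma mod_chol_pd:
  assumes "is_mod_chol p \<Omega> L D"
  shows "sym_pd p \<Omega>"
proof -
  have u: "ult p L" using assms by (auto simp: ult_def is_mod_chol_def)
  have id: "\<forall>a\<in>{1..p}. \<forall>b\<in>{1..p}. \<Omega> a b = (\<Sum>k=1..p. L a k * D k * L b k)"
    using assms by (auto simp: is_mod_chol_def)
  have pos: "\<forall>k\<in>{1..p}. D k > 0" using assms by (auto simp: is_mod_chol_def)
  show ?thesis unfolding sym_pd_def
  proof (intro conjI allI impI ballI)
    fix i j assume "i \<in> {1..p}" "j \<in> {1..p}"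
    then show "\<Omega> i j = \<Omega> j i" using id by (auto simp: mult_ac)
  next
    fix v :: "nat \<Rightarrow> real" assume "\<exists>i\<in>{1..p}. v i \<noteq> 0"
    then show "(\<Sum>i=1..p. \<Sum>j=1..p. v i * \<Omega> i j * v j) > 0"
      using ldl_pd[OF u id pos] unfolding quad_def by blast
  qed
qed

function CL :: "(nat\<Rightarrow>nat\<Rightarrow>real) \<Rightarrow> nat \<Rightarrow> nat \<Rightarrow> real" and CD :: "(nat\<Rightarrow>nat\<Rightarrow>real) \<Rightarrow> nat \<Rightarrow> real" where
  "CL A i k = (if k = 0 then 0 else if i = k then 1 else if k < i then
      (A i k - (\<Sum>m\<in>{1..<k}. CL A i m * CD A m * CL A k m)) / CD A k else 0)"
| "CD A k = (if k = 0 then 0 else A k k - (\<Sum>m\<in>{1..<k}. CL A k m * CL A k m * CD A m))"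
  by pat_completeness auto
termination
  by (relation "Wellfounded.measure (\<lambda>x. case x of Inl (A,i,k) \<Rightarrow> 2*k+2 | Inr (A,k) \<Rightarrow> 2*k+1)") auto

declare CL.simps[simp del] CD.simps[simp del]

lemma CL_diag: "k \<ge> 1 \<Longrightarrow> CL A k k = 1" by (subst CL.simps) simp
lemma CL_upper: "i < k \<Longrightarrow> CL A i k = 0" by (subst CL.simps) simp
lemma CL_zero: "CL A i 0 = 0" by (subst CL.simps) simp

lemma CD_diag_ident:
  assumes "k \<ge> 1"
  shows "A k k = (\<Sum>m\<in>{1..<k}. CL A k m * CD A m * CL A k m) + CD A k"
  using assms by (subst (2) CD.simps) (simp add: mult_ac)

lemma CL_ident:
  assumes "k \<ge> 1" "k < i" "CD A k \<noteq> 0"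
  shows "A i k = (\<Sum>m\<in>{1..<k}. CL A i m * CD A m * CL A k m) + CL A i k * CD A k"
  using assms by (subst (2) CL.simps) simp

lemma CL_col_ident:
  assumes "b \<ge> 1" "b \<le> a" "CD A b \<noteq> 0"
  shows "A a b = (\<Sum>k=1..b. CL A a k * CD A k * CL A b k)"
proof (cases "a = b")
  case True then show ?thesis using CD_diag_ident[of b A] assms sum_last[of b "\<lambda>k. CL A a k * CD A k * CL A b k"] by (simp add: CL_diag)
next
  case False then show ?thesis using CL_ident[of b a A] assms sum_last[of b "\<lambda>k. CL A a k * CD A k * CL A b k"] by (simp add: CL_diag)
qed

lemma ult_CL: "ult n (CL A)"
  by (auto simp: ult_def CL_diag CL_upper)

lemma CL_block:
  assumes "\<forall>a\<in>{1..p}. \<forall>b\<in>{1..p}. A a b = A b a"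
    and pos: "\<forall>k\<in>{1..<c}. CD A k \<noteq> 0" and c: "c \<le> p"
  shows "\<forall>a\<in>{1..c}. \<forall>b\<in>{1..c}. A a b = (\<Sum>k=1..c. CL A a k * CD A k * CL A b k)"
proof (intro ballI)
  fix a b assume a: "a \<in> {1..c}" and b: "b \<in> {1..c}"
  have gen: "A a b = (\<Sum>k=1..b. CL A a k * CD A k * CL A b k)" if "b \<le> a" "a \<in> {1..c}" "b \<in> {1..c}" for a b
  proof (cases "b = c")
    case True
    then have "a = b" using that by auto
    then show ?thesis using CD_diag_ident[of b A] that sum_last[of b "\<lambda>k. CL A a k * CD A k * CL A b k"] by (simp add: CL_diag)
  next
    case False
    then show ?thesis using CL_col_ident[of b a A] that pos by auto
  qed
  show "A a b = (\<Sum>k=1..c. CL A a k * CD A k * CL A b k)"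
  proof (cases "b \<le> a")
    case True
    then show ?thesis using gen[OF True a b] sum_trunc[of b c "\<lambda>k. CL A a k * CD A k * CL A b k"] b
      by (simp add: CL_upper)
  next
    case False
    then have "A b a = (\<Sum>k=1..a. CL A b k * CD A k * CL A a k)" using gen[of a b] a b by auto
    then show ?thesis using assms(1) a b c sum_trunc[of a c "\<lambda>k. CL A a k * CD A k * CL A b k"] False
      by (auto simp: CL_upper mult_ac)
  qed
qed

lemma pd_CD_pos:
  assumes "sym_pd p A"
  shows "\<forall>k\<in>{1..p}. CD A k > 0"
proof -
  have sy: "\<forall>a\<in>{1..p}. \<forall>b\<in>{1..p}. A a b = A b a" using assms by (auto simp: sym_pd_def)
  have pd: "\<forall>v. (\<exists>i\<in>{1..p}. v i \<noteq> 0) \<longrightarrow> quad p A v > 0" using sym_pd_quad[OF assms] by blast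
  have "c \<le> p \<longrightarrow> (\<forall>k\<in>{1..c}. CD A k > 0)" for c
  proof (induction c)
    case 0 then show ?case by simp
  next
    case (Suc c)
    show ?case
    proof
      assume c: "Suc c \<le> p"
      then have IH: "\<forall>k\<in>{1..c}. CD A k > 0" using Suc by simp
      have blk: "\<forall>a\<in>{1..Suc c}. \<forall>b\<in>{1..Suc c}. A a b = (\<Sum>k=1..Suc c. CL A a k * CD A k * CL A b k)"
      proof (rule CL_block[OF sy _ c])
        show "\<forall>k\<in>{1..<Suc c}. CD A k \<noteq> 0"
        proof
          fix k assume "k \<in> {1..<Suc c}"
          then have "k \<in> {1..c}" by auto
          then show "CD A k \<noteq> 0" using IH by force
        qed
      qed
      have "CD A (Suc c) > 0" by (rule pd_block_pos[OF pd ult_CL _ blk]) (use c in auto)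
      then show "\<forall>k\<in>{1..Suc c}. CD A k > 0" using IH le_Suc_eq by auto
    qed
  qed
  then show ?thesis by blast
qed

definition RL :: "nat \<Rightarrow> (nat\<Rightarrow>nat\<Rightarrow>real) \<Rightarrow> nat \<Rightarrow> nat \<Rightarrow> real" where
  "RL p A i j = (if i \<in> {1..p} \<and> j \<in> {1..p} then CL A i j else 0)"
definition RD :: "nat \<Rightarrow> (nat\<Rightarrow>nat\<Rightarrow>real) \<Rightarrow> nat \<Rightarrow> real" where
  "RD p A k = (if k \<in> {1..p} then CD A k else 0)"

lemma CD_pos_mod_chol:
  assumes sy: "\<forall>a\<in>{1..p}. \<forall>b\<in>{1..p}. A a b = A b a" and pos: "\<forall>k\<in>{1..p}. CD A k > 0"
  shows "is_mod_chol p A (RL p A) (RD p A)"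
proof -
  have blk: "\<forall>a\<in>{1..p}. \<forall>b\<in>{1..p}. A a b = (\<Sum>k=1..p. CL A a k * CD A k * CL A b k)"
  proof (rule CL_block[OF sy _ order.refl])
    show "\<forall>k\<in>{1..<p}. CD A k \<noteq> 0"
    proof
      fix k assume "k \<in> {1..<p}"
      then have "k \<in> {1..p}" by auto
      then show "CD A k \<noteq> 0" using pos by force
    qed
  qed
  show ?thesis unfolding is_mod_chol_def RL_def RD_def
    using pos blk by (auto simp: CL_diag CL_upper intro!: sum.cong)
qed

lemma sym_pd_iff_CD:
  assumes sy: "\<forall>a\<in>{1..p}. \<forall>b\<in>{1..p}. A a b = A b a"
  shows "sym_pd p A \<longleftrightarrow> (\<forall>k\<in>{1..p}. CD A k > 0)"
  using pd_CD_pos CD_pos_mod_chol[OF sy] mod_chol_pd by blast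

lemma chol_of_pd:
  assumes "sym_pd p A"
  shows "chol_L p A = RL p A" "chol_D p A = RD p A"
proof -
  have sy: "\<forall>a\<in>{1..p}. \<forall>b\<in>{1..p}. A a b = A b a" using assms by (auto simp: sym_pd_def)
  have "is_mod_chol p A (RL p A) (RD p A)" using CD_pos_mod_chol[OF sy pd_CD_pos[OF assms]] .
  then show "chol_L p A = RL p A" "chol_D p A = RD p A" using chol_eq by auto
qed

lemma chol_not_pd:
  assumes "\<not> sym_pd p A"
  shows "(THE (L, D). is_mod_chol p A L D) = The (\<lambda>_. False)"
proof -
  have "(\<lambda>(L, D). is_mod_chol p A L D) = (\<lambda>_. False)"
    using mod_chol_pd assms by (auto intro!: ext)
  then show ?thesis by simp
qed

lemma PiM_lborel_psf: "product_sigma_finite (\<lambda>_::'i. lborel :: real measure)"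
  by (simp add: product_sigma_finite_def sigma_finite_lborel)

lemma subst1:
  fixes G :: "('i \<Rightarrow> real) \<Rightarrow> ennreal" and \<alpha> \<beta> :: "('i \<Rightarrow> real) \<Rightarrow> real"
  assumes I: "finite I" "c \<in> I"
   and G[measurable]: "G \<in> borel_measurable (PiM I (\<lambda>_. lborel))"
   and al[measurable]: "\<alpha> \<in> borel_measurable (PiM I (\<lambda>_. lborel))"
   and be[measurable]: "\<beta> \<in> borel_measurable (PiM I (\<lambda>_. lborel))"
   and ia: "\<And>y t. y \<in> space (PiM I (\<lambda>_. lborel)) \<Longrightarrow> \<alpha> (y(c:=t)) = \<alpha> y"
   and ib: "\<And>y t. y \<in> space (PiM I (\<lambda>_. lborel)) \<Longrightarrow> \<beta> (y(c:=t)) = \<beta> y"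
   and nz: "\<And>y. \<beta> y \<noteq> 0"
  shows "(\<integral>\<^sup>+y. G y \<partial>PiM I (\<lambda>_. lborel)) =
         (\<integral>\<^sup>+y. G (y(c := \<alpha> y + \<beta> y * y c)) * ennreal \<bar>\<beta> y\<bar> \<partial>PiM I (\<lambda>_. lborel))"
proof -
  interpret product_sigma_finite "\<lambda>_::'i. lborel :: real measure" by (rule PiM_lborel_psf)
  define J where "J = I - {c}"
  have IJ: "I = insert c J" "c \<notin> J" "finite J" using I by (auto simp: J_def)
  define H where "H y = G (y(c := \<alpha> y + \<beta> y * y c)) * ennreal \<bar>\<beta> y\<bar>" for y
  have upd[measurable]: "(\<lambda>y. y(c := \<alpha> y + \<beta> y * y c)) \<in> measurable (PiM I (\<lambda>_. lborel)) (PiM I (\<lambda>_. lborel))"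
    by (rule measurable_fun_upd[where J=I]) (use I in auto)
  have H[measurable]: "H \<in> borel_measurable (PiM I (\<lambda>_. lborel))"
    unfolding H_def by measurable
  have L: "(\<integral>\<^sup>+y. G y \<partial>PiM I (\<lambda>_. lborel)) = (\<integral>\<^sup>+ x. (\<integral>\<^sup>+ t. G (x(c := t)) \<partial>lborel) \<partial>PiM J (\<lambda>_. lborel))"
    unfolding IJ(1) by (rule product_nn_integral_insert) (use IJ G in auto)
  have R: "(\<integral>\<^sup>+y. H y \<partial>PiM I (\<lambda>_. lborel)) = (\<integral>\<^sup>+ x. (\<integral>\<^sup>+ t. H (x(c := t)) \<partial>lborel) \<partial>PiM J (\<lambda>_. lborel))"
    unfolding IJ(1) by (rule product_nn_integral_insert) (use IJ H in auto)
  have inner: "(\<integral>\<^sup>+ t. G (x(c := t)) \<partial>lborel) = (\<integral>\<^sup>+ t. H (x(c := t)) \<partial>lborel)"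
    if x: "x \<in> space (PiM J (\<lambda>_. lborel))" for x
  proof -
    define x0 where "x0 = x(c := 0)"
    have x0: "x0 \<in> space (PiM I (\<lambda>_. lborel))"
      using x IJ by (auto simp: x0_def space_PiM PiE_def extensional_def)
    have xt: "x(c:=t) = x0(c:=t)" for t by (simp add: x0_def)
    have a: "\<alpha> (x(c:=t)) = \<alpha> x0" and b: "\<beta> (x(c:=t)) = \<beta> x0" for t
      using ia[OF x0] ib[OF x0] xt by auto
    have mG: "(\<lambda>t. G (x(c := t))) \<in> borel_measurable borel"
    proof -
      have "(\<lambda>t. x(c := t)) \<in> measurable lborel (PiM I (\<lambda>_. lborel))"
        using measurable_component_update[OF x IJ(2)] IJ(1) by simp
      then have "(\<lambda>t. G (x(c := t))) \<in> borel_measurable lborel" using G by measurable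
      then show ?thesis by simp
    qed
    have "(\<integral>\<^sup>+ t. G (x(c := t)) \<partial>lborel) = \<bar>\<beta> x0\<bar> * (\<integral>\<^sup>+ t. G (x(c := \<alpha> x0 + \<beta> x0 * t)) \<partial>lborel)"
      by (rule nn_integral_real_affine[OF mG nz])
    also have "\<dots> = (\<integral>\<^sup>+ t. G (x(c := \<alpha> x0 + \<beta> x0 * t)) * ennreal \<bar>\<beta> x0\<bar> \<partial>lborel)"
    proof -
      have "(\<lambda>t. G (x(c := \<alpha> x0 + \<beta> x0 * t))) \<in> borel_measurable lborel"
      proof -
        have "(\<lambda>t. x(c := \<alpha> x0 + \<beta> x0 * t)) \<in> measurable lborel (PiM I (\<lambda>_. lborel))"
          using measurable_compose[OF _ measurable_component_update[OF x IJ(2)], of "\<lambda>t. \<alpha> x0 + \<beta> x0 * t" lborel] IJ(1)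
          by simp
        then show ?thesis using G by measurable
      qed
      from nn_integral_cmult[OF this, of "ennreal \<bar>\<beta> x0\<bar>"]
      show ?thesis by (simp add: mult.commute)
    qed
    also have "\<dots> = (\<integral>\<^sup>+ t. H (x(c := t)) \<partial>lborel)"
      by (rule nn_integral_cong) (simp add: H_def a b)
    finally show ?thesis .
  qed
  show ?thesis
    unfolding L H_def[symmetric] R by (rule nn_integral_cong) (use inner in simp)
qed


definition PhiR :: "'i set \<Rightarrow> ('i \<Rightarrow> nat) \<Rightarrow> nat \<Rightarrow> (('i \<Rightarrow> real) \<Rightarrow> 'i \<Rightarrow> real) \<Rightarrow> (('i \<Rightarrow> real) \<Rightarrow> 'i \<Rightarrow> real)
   \<Rightarrow> ('i \<Rightarrow> real) \<Rightarrow> 'i \<Rightarrow> real" where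
  "PhiR I rk r al be z = (\<lambda>c. if c \<in> I \<and> rk c < r then al z c + be z c * z c else z c)"

definition JR :: "'i set \<Rightarrow> ('i \<Rightarrow> nat) \<Rightarrow> nat \<Rightarrow> (('i \<Rightarrow> real) \<Rightarrow> 'i \<Rightarrow> real) \<Rightarrow> ('i \<Rightarrow> real) \<Rightarrow> real" where
  "JR I rk r be z = (\<Prod>c\<in>{c\<in>I. rk c < r}. \<bar>be z c\<bar>)"

lemma chain:
  fixes F :: "('i \<Rightarrow> real) \<Rightarrow> ennreal" and rk :: "'i \<Rightarrow> nat" and al be :: "('i \<Rightarrow> real) \<Rightarrow> 'i \<Rightarrow> real"
  assumes I: "finite I" and rk: "inj_on rk I"
   and F[measurable]: "F \<in> borel_measurable (PiM I (\<lambda>_. lborel))"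
   and mal: "\<And>c. c \<in> I \<Longrightarrow> (\<lambda>z. al z c) \<in> borel_measurable (PiM I (\<lambda>_. lborel))"
   and mbe: "\<And>c. c \<in> I \<Longrightarrow> (\<lambda>z. be z c) \<in> borel_measurable (PiM I (\<lambda>_. lborel))"
   and ia: "\<And>c d y t. c \<in> I \<Longrightarrow> d \<in> I \<Longrightarrow> rk c \<le> rk d \<Longrightarrow> y \<in> space (PiM I (\<lambda>_. lborel)) \<Longrightarrow> al (y(d:=t)) c = al y c"
   and ib: "\<And>c d y t. c \<in> I \<Longrightarrow> d \<in> I \<Longrightarrow> rk c \<le> rk d \<Longrightarrow> y \<in> space (PiM I (\<lambda>_. lborel)) \<Longrightarrow> be (y(d:=t)) c = be y c"
   and nz: "\<And>z c. be z c \<noteq> 0"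
  shows "(\<integral>\<^sup>+z. F z \<partial>PiM I (\<lambda>_. lborel)) =
     (\<integral>\<^sup>+z. F (PhiR I rk r al be z) * ennreal (JR I rk r be z) \<partial>PiM I (\<lambda>_. lborel))"
proof (induction r)
  case 0
  have "PhiR I rk 0 al be z = z" for z by (auto simp: PhiR_def)
  then show ?case by (simp add: JR_def)
next
  case (Suc r)
  let ?M = "PiM I (\<lambda>_. lborel)"
  have mPhi: "PhiR I rk r' al be \<in> measurable ?M ?M" for r'
  proof (rule measurable_PiM_single'[where f="\<lambda>c z. PhiR I rk r' al be z c"])
    fix c assume c: "c \<in> I"
    show "(\<lambda>z. PhiR I rk r' al be z c) \<in> measurable ?M lborel"
      unfolding PhiR_def measurable_lborel1 using mal[OF c] mbe[OF c] c by measurable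
  next
    show "(\<lambda>z c. PhiR I rk r' al be z c) \<in> space ?M \<rightarrow> (\<Pi>\<^sub>E i\<in>I. space lborel)"
      by (auto simp: PhiR_def space_PiM PiE_def extensional_def)
  qed
  have mJ: "JR I rk r' be \<in> borel_measurable ?M" for r'
    unfolding JR_def
  proof (rule borel_measurable_prod)
    fix i assume "i \<in> {c\<in>I. rk c < r'}"
    then have "i \<in> I" by simp
    then show "(\<lambda>x. \<bar>be x i\<bar>) \<in> borel_measurable ?M" using mbe[of i] by measurable
  qed
  show ?case
  proof (cases "\<exists>c\<in>I. rk c = r")
    case False
    then have "{c\<in>I. rk c < Suc r} = {c\<in>I. rk c < r}" by (auto simp: less_Suc_eq)
    moreover have "PhiR I rk (Suc r) al be = PhiR I rk r al be"
      using False by (auto simp: PhiR_def less_Suc_eq intro!: ext)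
    ultimately show ?thesis using Suc.IH by (simp add: JR_def)
  next
    case True
    then obtain c where c: "c \<in> I" "rk c = r" by blast
    define G where "G z = F (PhiR I rk r al be z) * ennreal (JR I rk r be z)" for z
    have mG: "G \<in> borel_measurable ?M" unfolding G_def
      using measurable_compose[OF mPhi F] mJ by measurable
    have s: "(\<integral>\<^sup>+z. G z \<partial>?M) = (\<integral>\<^sup>+y. G (y(c := al y c + be y c * y c)) * ennreal \<bar>be y c\<bar> \<partial>?M)"
      by (rule subst1[OF I c(1) mG mal[OF c(1)] mbe[OF c(1)]])
         (use ia[OF c(1) c(1)] ib[OF c(1) c(1)] nz in auto)
    have eq: "G (y(c := al y c + be y c * y c)) * ennreal \<bar>be y c\<bar> =
        F (PhiR I rk (Suc r) al be y) * ennreal (JR I rk (Suc r) be y)" if y: "y \<in> space ?M" for y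
    proof -
      let ?y = "y(c := al y c + be y c * y c)"
      have P: "PhiR I rk r al be ?y = PhiR I rk (Suc r) al be y"
      proof
        fix d show "PhiR I rk r al be ?y d = PhiR I rk (Suc r) al be y d"
        proof (cases "d \<in> I \<and> rk d < r")
          case True
          then have "d \<noteq> c" using c by auto
          moreover have "al ?y d = al y d" "be ?y d = be y d"
            using ia[of d c y] ib[of d c y] True c y by auto
          ultimately show ?thesis using True by (simp add: PhiR_def)
        next
          case False
          show ?thesis
          proof (cases "d = c")
            case True then show ?thesis using c by (simp add: PhiR_def)
          next
            case dc: False
            then have "\<not> (d \<in> I \<and> rk d < Suc r)" using False rk c by (auto simp: less_Suc_eq inj_on_def)
            then show ?thesis using False dc by (auto simp: PhiR_def)
          qed
        qed
      qed
      have "JR I rk r be ?y = JR I rk r be y"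
        unfolding JR_def by (rule prod.cong[OF refl]) (use ib c y in \<open>auto intro!: arg_cong[where f=abs]\<close>)
      moreover have "{d\<in>I. rk d < Suc r} = insert c {d\<in>I. rk d < r}" using c rk by (auto simp: less_Suc_eq inj_on_def)
      moreover have "c \<notin> {d\<in>I. rk d < r}" using c by auto
      ultimately have "JR I rk (Suc r) be y = \<bar>be y c\<bar> * JR I rk r be ?y"
        using I by (simp add: JR_def)
      then show ?thesis unfolding G_def P
        by (simp add: ennreal_mult' JR_def prod_nonneg mult_ac)
    qed
    show ?thesis unfolding Suc.IH G_def[symmetric] s
      by (rule nn_integral_cong) (use eq in simp)
  qed
qed

lemma AE_coord_nz:
  assumes I: "finite I" "c \<in> I"
  shows "AE z in PiM I (\<lambda>_. lborel). z c \<noteq> (0::real)"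
proof -
  interpret product_sigma_finite "\<lambda>_::'i. lborel :: real measure" by (rule PiM_lborel_psf)
  define J where "J = I - {c}"
  have IJ: "I = insert c J" "c \<notin> J" "finite J" using I by (auto simp: J_def)
  have m: "(\<lambda>z. indicator {z. z c = (0::real)} z :: ennreal) \<in> borel_measurable (PiM I (\<lambda>_. lborel))"
  proof -
    have "(\<lambda>z. z c) \<in> borel_measurable (PiM I (\<lambda>_. lborel))" using I by measurable
    then have "{z \<in> space (PiM I (\<lambda>_. lborel)). z c = 0} \<in> sets (PiM I (\<lambda>_. lborel))" by measurable
    moreover have "{z. z c = (0::real)} \<inter> space (PiM I (\<lambda>_. lborel)) = {z \<in> space (PiM I (\<lambda>_. lborel)). z c = 0}" by auto
    ultimately show ?thesis by (simp add: borel_measurable_indicator_iff)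
  qed
  have "(\<integral>\<^sup>+z. indicator {z. z c = (0::real)} z \<partial>PiM I (\<lambda>_. lborel)) =
      (\<integral>\<^sup>+ x. (\<integral>\<^sup>+ t. indicator {z. z c = (0::real)} (x(c:=t)) \<partial>lborel) \<partial>PiM J (\<lambda>_. lborel))"
    unfolding IJ(1) by (rule product_nn_integral_insert) (use IJ m in auto)
  also have "\<dots> = 0"
  proof -
    have inner0: "(\<integral>\<^sup>+ t. (indicator {z. z c = (0::real)} (x(c:=t)) :: ennreal) \<partial>lborel) = 0" for x
    proof -
      have "(\<integral>\<^sup>+ t. (indicator {z. z c = (0::real)} (x(c:=t)) :: ennreal) \<partial>lborel) = (\<integral>\<^sup>+ t. indicator {0::real} t \<partial>lborel)"
        by (rule nn_integral_cong) (simp add: indicator_def)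
      then show ?thesis by simp
    qed
    show ?thesis by (simp add: inner0)
  qed
  finally have "AE z in PiM I (\<lambda>_. lborel). indicator {z. z c = (0::real)} z = (0::ennreal)"
    using nn_integral_0_iff_AE[OF m] by simp
  then show ?thesis by eventually_elim (auto simp: indicator_def split: if_splits)
qed

function ZL :: "(nat\<Rightarrow>nat\<Rightarrow>bool) \<Rightarrow> (nat\<times>nat\<Rightarrow>real) \<Rightarrow> nat \<Rightarrow> nat \<Rightarrow> real"
  and ZD :: "(nat\<Rightarrow>nat\<Rightarrow>bool) \<Rightarrow> (nat\<times>nat\<Rightarrow>real) \<Rightarrow> nat \<Rightarrow> real" where
  "ZL ed z i k = (if k = 0 then 0 else if i = k then 1 else if k < i then
      (if ed i k then z (i, k) else - (\<Sum>m\<in>{1..<k}. ZL ed z i m * ZD ed z m * ZL ed z k m) / ZD ed z k) else 0)"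
| "ZD ed z k = (if k = 0 then 1 else ZD ed z (k - 1) * z (k, k))"
  by pat_completeness auto
termination
  by (relation "Wellfounded.measure (\<lambda>x. case x of Inl (e,z,i,k) \<Rightarrow> 2*k+2 | Inr (e,z,k) \<Rightarrow> 2*k+1)") auto

declare ZL.simps[simp del] ZD.simps[simp del]

lemma ZD_prod: "ZD ed z k = (\<Prod>l=1..k. z (l, l))"
proof (induction k)
  case 0 then show ?case by (subst ZD.simps) simp
next
  case (Suc k) then show ?case by (subst ZD.simps) (simp add: prod.nat_ivl_Suc' mult.commute)
qed

lemma ZD_0[simp]: "ZD ed z 0 = 1" by (subst ZD.simps) simp
lemma ZD_Suc: "ZD ed z (Suc k) = ZD ed z k * z (Suc k, Suc k)" by (subst ZD.simps) simp
lemma ZL_diag: "k \<ge> 1 \<Longrightarrow> ZL ed z k k = 1" by (subst ZL.simps) simp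
lemma ZL_upper: "i < k \<Longrightarrow> ZL ed z i k = 0" by (subst ZL.simps) simp
lemma ZL_col0: "ZL ed z i 0 = 0" by (subst ZL.simps) simp
lemma ZL_edge: "1 \<le> k \<Longrightarrow> k < i \<Longrightarrow> ed i k \<Longrightarrow> ZL ed z i k = z (i, k)"
  by (subst ZL.simps) simp
lemma ZL_nonedge: "1 \<le> k \<Longrightarrow> k < i \<Longrightarrow> \<not> ed i k \<Longrightarrow>
   ZL ed z i k = - (\<Sum>m\<in>{1..<k}. ZL ed z i m * ZD ed z m * ZL ed z k m) / ZD ed z k"
  by (subst ZL.simps) simp

lemma ZL_nonedge_ident:
  assumes "1 \<le> k" "k < i" "\<not> ed i k" "ZD ed z k \<noteq> 0"
  shows "(\<Sum>m\<in>{1..<k}. ZL ed z i m * ZD ed z m * ZL ed z k m) + ZL ed z i k * ZD ed z k = 0"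
  using assms by (simp add: ZL_nonedge)

lemma ZD_dep:
  assumes "\<forall>l. 1 \<le> l \<and> l \<le> k \<longrightarrow> z (l, l) = z' (l, l)"
  shows "ZD ed z k = ZD ed z' k"
  using assms by (simp add: ZD_prod)

lemma ZL_dep:
  assumes "\<forall>i l. 1 \<le> l \<and> l \<le> j \<longrightarrow> z (i, l) = z' (i, l)"
  shows "k \<le> j \<Longrightarrow> ZL ed z i k = ZL ed z' i k"
proof (induction k arbitrary: i rule: less_induct)
  case (less k)
  have D: "ZD ed z k = ZD ed z' k" by (rule ZD_dep) (use assms less.prems in auto)
  have D': "\<And>m. m \<le> k \<Longrightarrow> ZD ed z m = ZD ed z' m" by (rule ZD_dep) (use assms less.prems in auto)
  have IH: "\<And>m i. m \<in> {1..<k} \<Longrightarrow> ZL ed z i m = ZL ed z' i m" using less by auto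
  show ?case
  proof (cases "k = 0")
    case True then show ?thesis by (simp add: ZL_col0)
  next
    case False
    then show ?thesis
      using IH D D' assms less.prems
      by (subst (1 2) ZL.simps) (auto intro!: sum.cong arg_cong2[where f="(/)"])
  qed
qed

lemma ZL_dep2:
  assumes "\<forall>i l. 1 \<le> l \<and> l < k \<longrightarrow> z (i, l) = z' (i, l)"
    and "z (b, k) = z' (b, k)" and "z (k, k) = z' (k, k)"
  shows "ZL ed z b k = ZL ed z' b k"
proof (cases "k = 0")
  case True then show ?thesis by (simp add: ZL_col0)
next
  case False
  have IH: "\<And>m i. m \<in> {1..<k} \<Longrightarrow> ZL ed z i m = ZL ed z' i m"
    by (rule ZL_dep[where j="k - 1"]) (use assms in auto)
  have D: "ZD ed z k = ZD ed z' k"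
    by (rule ZD_dep) (use assms in \<open>metis le_neq_implies_less\<close>)
  have D': "\<And>m. m < k \<Longrightarrow> ZD ed z m = ZD ed z' m" by (rule ZD_dep) (use assms in auto)
  show ?thesis
    using IH D D' assms False
    by (subst (1 2) ZL.simps) (auto intro!: sum.cong arg_cong2[where f="(/)"])
qed

locale gbset =
  fixes V :: "'a set" and E :: "'a set set" and \<sigma> :: "'a \<Rightarrow> nat" and p :: nat
  assumes simple: "simple_graph V E" and cardV: "card V = p" and gbo: "GB_ordering V E \<sigma>"
begin

abbreviation "w \<equiv> inv_into V \<sigma>"
abbreviation "ed \<equiv> ord_edge V E \<sigma>"
abbreviation "I \<equiv> free_idx V E \<sigma>"

lemma bij: "bij_betw \<sigma> V {1..p}"
  using gbo cardV by (simp add: GB_ordering_def is_ordering_def)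

lemma w_in: "i \<in> {1..p} \<Longrightarrow> w i \<in> V"
  using bij_betw_apply[OF bij_betw_inv_into[OF bij]] by blast

lemma sigma_w: "i \<in> {1..p} \<Longrightarrow> \<sigma> (w i) = i"
  using bij by (metis bij_betw_imp_surj_on f_inv_into_f)

lemma w_inj: "i \<in> {1..p} \<Longrightarrow> j \<in> {1..p} \<Longrightarrow> w i = w j \<Longrightarrow> i = j"
  using sigma_w by metis

lemma finite_I: "finite I"
proof -
  have "I \<subseteq> {1..p} \<times> {1..p}" using cardV by (auto simp: free_idx_def)
  then show ?thesis by (rule finite_subset) simp
qed

lemma I_iff: "(i, j) \<in> I \<longleftrightarrow> i \<in> {1..p} \<and> j \<in> {1..p} \<and> j \<le> i \<and> (i = j \<or> ed i j)"
  using cardV by (simp add: free_idx_def)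

lemma fill_mono: "i \<le> j \<Longrightarrow> fill_edges V E \<sigma> i \<subseteq> fill_edges V E \<sigma> j"
proof (induction j)
  case 0 then show ?case by simp
next
  case (Suc j) then show ?case by (cases "i = Suc j") auto
qed

lemma ZL_fill:
  assumes "1 \<le> b" "b < a" "a \<le> p" "ZL ed z a b \<noteq> 0"
  shows "{w a, w b} \<in> fill_edges V E \<sigma> (b - 1)"
  using assms
proof (induction b arbitrary: a rule: less_induct)
  case (less b)
  show ?case
  proof (cases "ed a b")
    case True
    then have "{w a, w b} \<in> E" by (simp add: ord_edge_def)
    then show ?thesis using fill_mono[of 0 "b - 1"] by auto
  next
    case False
    then have "(\<Sum>m\<in>{1..<b}. ZL ed z a m * ZD ed z m * ZL ed z b m) \<noteq> 0"
      using less.prems ZL_nonedge[of b a ed z] by auto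
    then obtain m where m: "m \<in> {1..<b}" "ZL ed z a m * ZD ed z m * ZL ed z b m \<noteq> 0"
      by (meson sum.neutral)
    have f1: "{w a, w m} \<in> fill_edges V E \<sigma> (m - 1)"
      by (rule less.IH) (use m less.prems in auto)
    have f2: "{w b, w m} \<in> fill_edges V E \<sigma> (m - 1)"
      by (rule less.IH) (use m less.prems in auto)
    have sm: "Suc (m - 1) = m" using m by auto
    have "{w a, w b} \<in> fill_edges V E \<sigma> (Suc (m - 1))"
    proof -
      have "w a \<noteq> w b" using w_inj[of a b] less.prems by auto
      moreover have "w a \<in> V" "w b \<in> V" using w_in less.prems by auto
      moreover have "\<sigma> (w a) > Suc (m - 1)" "\<sigma> (w b) > Suc (m - 1)"
        using sigma_w less.prems m sm by auto
      moreover have "{w a, inv_into V \<sigma> (Suc (m - 1))} \<in> fill_edges V E \<sigma> (m - 1)"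
        "{w b, inv_into V \<sigma> (Suc (m - 1))} \<in> fill_edges V E \<sigma> (m - 1)"
        using f1 f2 sm by auto
      ultimately show ?thesis by (subst fill_edges.simps) blast
    qed
    then have "{w a, w b} \<in> fill_edges V E \<sigma> m" using sm by simp
    moreover have "m \<le> b - 1" using m by auto
    ultimately show ?thesis using fill_mono[of m "b - 1"] by auto
  qed
qed

lemma gb_pair:
  assumes "1 \<le> m" "m < b" "b < a" "a \<le> p" "\<not> ed a b"
    and "ZL ed z1 a m \<noteq> 0" "ZL ed z2 b m \<noteq> 0"
  shows "ed a m \<or> ed b m"
proof (rule ccontr)
  assume nn: "\<not> (ed a m \<or> ed b m)"
  have f1: "{w a, w m} \<in> fill_edges V E \<sigma> (m - 1)" by (rule ZL_fill) (use assms in auto)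
  have f2: "{w b, w m} \<in> fill_edges V E \<sigma> (m - 1)" by (rule ZL_fill) (use assms in auto)
  have sm: "Suc (m - 1) = m" using assms by auto
  have f3: "{w a, w b} \<in> fill_edges V E \<sigma> m"
  proof -
    have "w a \<noteq> w b" using w_inj[of a b] assms by auto
    moreover have "w a \<in> V" "w b \<in> V" using w_in assms by auto
    moreover have "\<sigma> (w a) > Suc (m - 1)" "\<sigma> (w b) > Suc (m - 1)"
      using sigma_w assms sm by auto
    moreover have "{w a, inv_into V \<sigma> (Suc (m - 1))} \<in> fill_edges V E \<sigma> (m - 1)"
      "{w b, inv_into V \<sigma> (Suc (m - 1))} \<in> fill_edges V E \<sigma> (m - 1)"
      using f1 f2 sm by auto
    ultimately have "{w a, w b} \<in> fill_edges V E \<sigma> (Suc (m - 1))" by (subst fill_edges.simps) blast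
    then show ?thesis using sm by simp
  qed
  have T: "fill_edges V E \<sigma> i \<subseteq> triangulation V E \<sigma>" if "i \<le> p - 2" for i
    using fill_mono[OF that] cardV by (simp add: triangulation_def)
  have le1: "m - 1 \<le> p - 2" "m \<le> p - 2" using assms by arith+
  have t1: "{w a, w m} \<in> triangulation V E \<sigma>" using T[OF le1(1)] f1 by auto
  have t2: "{w b, w m} \<in> triangulation V E \<sigma>" using T[OF le1(1)] f2 by auto
  have t3: "{w a, w b} \<in> triangulation V E \<sigma>" using T[OF le1(2)] f3 by auto
  have "{w a, w b} \<notin> E" "{w b, w m} \<notin> E" "{w a, w m} \<notin> E"
    using assms nn by (auto simp: ord_edge_def)
  then show False using gbo t1 t2 t3 unfolding GB_ordering_def by blast
qed

end

lemma ZD_nz: "(\<forall>l\<in>{1..p}. z (l, l) \<noteq> (0::real)) \<Longrightarrow> k \<le> p \<Longrightarrow> ZD ed z k \<noteq> 0"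
  by (simp add: ZD_prod prod_zero_iff)

lemma ZD_pos: "(\<forall>l\<in>{1..p}. z (l, l) > (0::real)) \<Longrightarrow> k \<le> p \<Longrightarrow> ZD ed z k > 0"
  by (simp add: ZD_prod) (rule prod_pos, auto)

context gbset
begin

definition Xv :: "(nat \<times> nat \<Rightarrow> real) \<Rightarrow> nat \<times> nat \<Rightarrow> real" where
  "Xv z c = (case c of (a, b) \<Rightarrow> \<Sum>k=1..b. ZL ed z a k * ZD ed z k * ZL ed z b k)"

definition PhiX :: "(nat \<times> nat \<Rightarrow> real) \<Rightarrow> nat \<times> nat \<Rightarrow> real" where
  "PhiX z = restrict (Xv z) I"

definition RZL where "RZL z i j = (if i \<in> {1..p} \<and> j \<in> {1..p} then ZL ed z i j else 0)"
definition RZD where "RZD z k = (if k \<in> {1..p} then ZD ed z k else 0)"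

lemma sum_ZL_trunc:
  assumes "b \<le> a" "b \<le> p"
  shows "(\<Sum>k=1..p. ZL ed z a k * ZD ed z k * ZL ed z b k) = (\<Sum>k=1..b. ZL ed z a k * ZD ed z k * ZL ed z b k)"
  by (rule sum_trunc) (use assms in \<open>auto simp: ZL_upper\<close>)

lemma full_ident_ge:
  assumes nz: "\<forall>l\<in>{1..p}. z (l, l) \<noteq> 0" and ij: "i \<in> {1..p}" "j \<in> {1..p}" "j \<le> i"
  shows "omega_of V E \<sigma> (PhiX z) i j = (\<Sum>k=1..p. ZL ed z i k * ZD ed z k * ZL ed z j k)"
proof -
  have mm: "max i j = i" "min i j = j" using ij by auto
  show ?thesis
  proof (cases "(i, j) \<in> I")
    case True
    then show ?thesis using ij sum_ZL_trunc[of j i z]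
      by (simp add: omega_of_def mm PhiX_def Xv_def)
  next
    case False
    then have ne: "j < i" "\<not> ed i j" using ij I_iff by auto
    have "(\<Sum>k=1..p. ZL ed z i k * ZD ed z k * ZL ed z j k) = (\<Sum>k=1..j. ZL ed z i k * ZD ed z k * ZL ed z j k)"
      using ij sum_ZL_trunc[of j i z] by simp
    also have "\<dots> = (\<Sum>k\<in>{1..<j}. ZL ed z i k * ZD ed z k * ZL ed z j k) + ZL ed z i j * ZD ed z j"
      using sum_last[of j "\<lambda>k. ZL ed z i k * ZD ed z k * ZL ed z j k"] ij by (simp add: ZL_diag)
    also have "\<dots> = 0"
      by (rule ZL_nonedge_ident) (use ij ne ZD_nz[OF nz] in auto)
    finally show ?thesis using False by (simp add: omega_of_def mm)
  qed
qed

lemma omega_sym: "omega_of V E \<sigma> x i j = omega_of V E \<sigma> x j i"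
  by (simp add: omega_of_def max.commute min.commute)

lemma full_ident:
  assumes nz: "\<forall>l\<in>{1..p}. z (l, l) \<noteq> 0" and ij: "i \<in> {1..p}" "j \<in> {1..p}"
  shows "omega_of V E \<sigma> (PhiX z) i j = (\<Sum>k=1..p. ZL ed z i k * ZD ed z k * ZL ed z j k)"
proof (cases "j \<le> i")
  case True then show ?thesis using full_ident_ge[OF nz ij] by simp
next
  case False
  then have "omega_of V E \<sigma> (PhiX z) j i = (\<Sum>k=1..p. ZL ed z j k * ZD ed z k * ZL ed z i k)"
    using full_ident_ge[OF nz ij(2,1)] by simp
  then show ?thesis by (simp add: omega_sym[of _ i j] mult_ac)
qed

lemma mod_chol_PhiX:
  assumes pos: "\<forall>l\<in>{1..p}. z (l, l) > 0"
  shows "is_mod_chol p (omega_of V E \<sigma> (PhiX z)) (RZL z) (RZD z)"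
proof -
  have nz: "\<forall>l\<in>{1..p}. z (l, l) \<noteq> 0" using pos by auto
  show ?thesis unfolding is_mod_chol_def
    using full_ident[OF nz] ZD_pos[OF pos]
    by (auto simp: RZL_def RZD_def ZL_diag ZL_upper intro!: sum.cong)
qed

lemma not_pd_PhiX:
  assumes nz: "\<forall>l\<in>{1..p}. z (l, l) \<noteq> 0" and np: "\<not> (\<forall>l\<in>{1..p}. z (l, l) > 0)"
  shows "\<not> sym_pd p (omega_of V E \<sigma> (PhiX z))"
proof
  assume pd: "sym_pd p (omega_of V E \<sigma> (PhiX z))"
  have pos: "ZD ed z c > 0" if c: "c \<in> {1..p}" for c
  proof (rule pd_block_pos[where L="ZL ed z"])
    show "\<forall>v. (\<exists>i\<in>{1..p}. v i \<noteq> 0) \<longrightarrow> quad p (omega_of V E \<sigma> (PhiX z)) v > 0"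
      using sym_pd_quad[OF pd] by blast
    show "ult p (ZL ed z)" by (auto simp: ult_def ZL_diag ZL_upper)
    show "c \<in> {1..p}" by fact
    show "\<forall>a\<in>{1..c}. \<forall>b\<in>{1..c}. omega_of V E \<sigma> (PhiX z) a b = (\<Sum>k=1..c. ZL ed z a k * ZD ed z k * ZL ed z b k)"
    proof (intro ballI)
      fix a b assume ab: "a \<in> {1..c}" "b \<in> {1..c}"
      then have "omega_of V E \<sigma> (PhiX z) a b = (\<Sum>k=1..p. ZL ed z a k * ZD ed z k * ZL ed z b k)"
        using full_ident[OF nz] c by auto
      also have "\<dots> = (\<Sum>k=1..c. ZL ed z a k * ZD ed z k * ZL ed z b k)"
        by (rule sum_trunc) (use ab c in \<open>auto simp: ZL_upper\<close>)
      finally show "omega_of V E \<sigma> (PhiX z) a b = (\<Sum>k=1..c. ZL ed z a k * ZD ed z k * ZL ed z b k)" .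
    qed
  qed
  have "z (l, l) > 0" if l: "l \<in> {1..p}" for l
  proof -
    have "ZD ed z l = ZD ed z (l - 1) * z (l, l)" using l ZD_Suc[of ed z "l - 1"] by auto
    moreover have "ZD ed z (l - 1) > 0"
    proof (cases "l = 1")
      case True then show ?thesis by simp
    next
      case False
      then have "l - 1 \<in> {1..p}" using l by auto
      then show ?thesis using pos by blast
    qed
    ultimately show ?thesis using pos[OF l] by (simp add: zero_less_mult_iff)
  qed
  then show False using np by blast
qed

lemma LD_PhiX:
  assumes z: "z \<in> space (PiM I (\<lambda>_. lborel))" and pos: "\<forall>l\<in>{1..p}. z (l, l) > 0"
  shows "LD_coords V E \<sigma> (PhiX z) = z"
proof -
  have mc: "is_mod_chol p (omega_of V E \<sigma> (PhiX z)) (RZL z) (RZD z)" by (rule mod_chol_PhiX[OF pos])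
  note ch = chol_eq[OF mc]
  have ext: "z c = undefined" if "c \<notin> I" for c
    using z that by (cases c) (auto simp: space_PiM PiE_def extensional_def)
  show ?thesis
  proof
    fix c
    show "LD_coords V E \<sigma> (PhiX z) c = z c"
    proof (cases "c \<in> I")
      case False then show ?thesis by (simp add: LD_coords_def ext Let_def)
    next
      case True
      obtain i j where c: "c = (i, j)" by (cases c)
      have ij: "i \<in> {1..p}" "j \<in> {1..p}" "j \<le> i" "i = j \<or> ed i j" using True c I_iff by auto
      show ?thesis
      proof (cases "j < i")
        case True
        then have "ed i j" using ij by auto
        then have "RZL z i j = z (i, j)" using ij True by (simp add: RZL_def ZL_edge)
        then show ?thesis using \<open>c \<in> I\<close> c True cardV ch by (simp add: LD_coords_def Let_def)
      next
        case False
        then have ii: "i = j" using ij by auto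
        have "Dtilde (RZD z) i = z (i, i)"
        proof (cases "i = 1")
          case True then show ?thesis using ij ZD_Suc[of ed z 0] by (simp add: Dtilde_def RZD_def)
        next
          case False
          then have "i - 1 \<in> {1..p}" using ij by auto
          moreover have "ZD ed z i = ZD ed z (i - 1) * z (i, i)" using ij ZD_Suc[of ed z "i - 1"] by auto
          moreover have "ZD ed z (i - 1) > 0" using ZD_pos[OF pos, where k="i - 1"] ij by auto
          ultimately show ?thesis using ij False by (simp add: Dtilde_def RZD_def)
        qed
        then show ?thesis using \<open>c \<in> I\<close> c ii cardV ch by (simp add: LD_coords_def Let_def)
      qed
    qed
  qed
qed

lemma gw_PhiX_pos:
  assumes pos: "\<forall>l\<in>{1..p}. z (l, l) > 0"
  shows "gw_unnorm V E \<sigma> U \<delta> (PhiX z) = (\<Prod>k=1..p. ZD ed z k powr (\<delta> k / 2)) *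
     exp (- (1/2) * (\<Sum>i=1..p. \<Sum>j=1..p. (\<Sum>k=1..p. ZL ed z i k * ZD ed z k * ZL ed z j k) * U j i))"
proof -
  have mc: "is_mod_chol p (omega_of V E \<sigma> (PhiX z)) (RZL z) (RZD z)" by (rule mod_chol_PhiX[OF pos])
  have nz: "\<forall>l\<in>{1..p}. z (l, l) \<noteq> 0" using pos by auto
  show ?thesis
    using mod_chol_pd[OF mc] chol_eq[OF mc] cardV full_ident[OF nz]
    by (simp add: gw_unnorm_def Let_def RZD_def)
qed

lemma gw_PhiX_neg:
  assumes nz: "\<forall>l\<in>{1..p}. z (l, l) \<noteq> 0" and np: "\<not> (\<forall>l\<in>{1..p}. z (l, l) > 0)"
  shows "gw_unnorm V E \<sigma> U \<delta> (PhiX z) = 0"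
  using not_pd_PhiX[OF nz np] cardV by (simp add: gw_unnorm_def Let_def)

lemma omega_sym': "\<forall>a\<in>{1..p}. \<forall>b\<in>{1..p}. omega_of V E \<sigma> x a b = omega_of V E \<sigma> x b a"
  using omega_sym by blast

lemma gw_alt:
  "gw_unnorm V E \<sigma> U \<delta> x = (if \<forall>k\<in>{1..p}. CD (omega_of V E \<sigma> x) k > 0 then
     (\<Prod>k=1..p. CD (omega_of V E \<sigma> x) k powr (\<delta> k / 2)) *
       exp (- (1/2) * (\<Sum>i=1..p. \<Sum>j=1..p. omega_of V E \<sigma> x i j * U j i)) else 0)"
proof (cases "sym_pd p (omega_of V E \<sigma> x)")
  case True
  then show ?thesis using sym_pd_iff_CD[OF omega_sym'] chol_of_pd[OF True] cardV
    by (auto simp: gw_unnorm_def Let_def RD_def intro!: prod.cong)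
next
  case False
  then show ?thesis using sym_pd_iff_CD[OF omega_sym'] cardV by (auto simp: gw_unnorm_def Let_def)
qed

definition LDgood where
  "LDgood x = restrict (\<lambda>(i, j). if j < i then RL p (omega_of V E \<sigma> x) i j else Dtilde (RD p (omega_of V E \<sigma> x)) i) I"
definition LDbad where
  "LDbad = restrict (\<lambda>(i, j). if j < i then fst (The (\<lambda>_::(nat\<Rightarrow>nat\<Rightarrow>real)\<times>(nat\<Rightarrow>real). False)) i j
     else Dtilde (snd (The (\<lambda>_::(nat\<Rightarrow>nat\<Rightarrow>real)\<times>(nat\<Rightarrow>real). False))) i) I"

lemma LD_alt:
  "LD_coords V E \<sigma> x = (if \<forall>k\<in>{1..p}. CD (omega_of V E \<sigma> x) k > 0 then LDgood x else LDbad)"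
proof (cases "sym_pd p (omega_of V E \<sigma> x)")
  case True
  then show ?thesis using sym_pd_iff_CD[OF omega_sym'] chol_of_pd[OF True] cardV
    by (auto simp: LD_coords_def Let_def LDgood_def)
next
  case False
  then show ?thesis using sym_pd_iff_CD[OF omega_sym'] chol_not_pd[OF False] cardV
    by (auto simp: LD_coords_def Let_def LDbad_def chol_L_def chol_D_def)
qed

end

lemma meas_coord: "(\<lambda>z. z c) \<in> borel_measurable (PiM I (\<lambda>_. lborel :: real measure))"
proof (cases "c \<in> I")
  case True
  then show ?thesis using measurable_component_singleton[OF True, of "\<lambda>_. lborel"] by simp
next
  case False
  have "(\<lambda>z. z c) \<in> borel_measurable (PiM I (\<lambda>_. lborel :: real measure)) \<longleftrightarrow>
        (\<lambda>z. undefined :: real) \<in> borel_measurable (PiM I (\<lambda>_. lborel :: real measure))"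
    apply (rule measurable_cong[where M="PiM I (\<lambda>_. lborel :: real measure)" and f="\<lambda>z. z c" and g="\<lambda>z. undefined" and M'=borel])
    using False by (auto simp: space_PiM PiE_def extensional_def)
  then show ?thesis by simp
qed

lemma ZD_meas:
  assumes f: "\<And>c. (\<lambda>x. f x c) \<in> borel_measurable M"
  shows "(\<lambda>x. ZD ed (f x) k) \<in> borel_measurable M"
  unfolding ZD_prod by (rule borel_measurable_prod) (use f in auto)

lemma ZL_meas:
  assumes f: "\<And>c. (\<lambda>x. f x c) \<in> borel_measurable M"
  shows "(\<lambda>x. ZL ed (f x) i k) \<in> borel_measurable M"
proof (induction k arbitrary: i rule: less_induct)
  case (less k)
  show ?case
  proof (cases "k = 0 \<or> i = k \<or> \<not> k < i")
    case True
    then have "(\<lambda>x. ZL ed (f x) i k) = (\<lambda>x. if k = 0 then 0 else if i = k then 1 else 0)"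
      by (auto simp: ZL_col0 ZL_diag ZL_upper)
    then show ?thesis by simp
  next
    case False
    show ?thesis
    proof (cases "ed i k")
      case True
      then have "(\<lambda>x. ZL ed (f x) i k) = (\<lambda>x. f x (i, k))" using False by (auto simp: ZL_edge)
      then show ?thesis using f by simp
    next
      case ne: False
      then have e: "(\<lambda>x. ZL ed (f x) i k) = (\<lambda>x. - (\<Sum>m\<in>{1..<k}. ZL ed (f x) i m * ZD ed (f x) m * ZL ed (f x) k m) / ZD ed (f x) k)"
        using False by (auto simp: ZL_nonedge)
      have s: "(\<lambda>x. \<Sum>m\<in>{1..<k}. ZL ed (f x) i m * ZD ed (f x) m * ZL ed (f x) k m) \<in> borel_measurable M"
      proof (rule borel_measurable_sum)
        fix m assume "m \<in> {1..<k}"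
        then have "m < k" by simp
        then show "(\<lambda>x. ZL ed (f x) i m * ZD ed (f x) m * ZL ed (f x) k m) \<in> borel_measurable M"
          using less.IH[of m i] less.IH[of m k] ZD_meas[OF f, where ed=ed and k=m] by measurable
      qed
      show ?thesis unfolding e using s ZD_meas[OF f, where ed=ed and k=k] by measurable
    qed
  qed
qed

lemma CLD_meas:
  assumes A: "\<And>a b. (\<lambda>x. A x a b) \<in> borel_measurable M"
  shows "(\<forall>i. (\<lambda>x. CL (A x) i k) \<in> borel_measurable M) \<and> (\<lambda>x. CD (A x) k) \<in> borel_measurable M"
proof (induction k rule: less_induct)
  case (less k)
  have IHL: "\<And>m i. m < k \<Longrightarrow> (\<lambda>x. CL (A x) i m) \<in> borel_measurable M" using less by blast
  have IHD: "\<And>m. m < k \<Longrightarrow> (\<lambda>x. CD (A x) m) \<in> borel_measurable M" using less by blast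
  have D: "(\<lambda>x. CD (A x) k) \<in> borel_measurable M"
  proof (cases "k = 0")
    case True then show ?thesis by (subst CD.simps) simp
  next
    case False
    then have e: "(\<lambda>x. CD (A x) k) = (\<lambda>x. A x k k - (\<Sum>m\<in>{1..<k}. CL (A x) k m * CL (A x) k m * CD (A x) m))"
      by (subst CD.simps) simp
    have s: "(\<lambda>x. \<Sum>m\<in>{1..<k}. CL (A x) k m * CL (A x) k m * CD (A x) m) \<in> borel_measurable M"
    proof (rule borel_measurable_sum)
      fix m assume "m \<in> {1..<k}"
      then have "m < k" by simp
      then show "(\<lambda>x. CL (A x) k m * CL (A x) k m * CD (A x) m) \<in> borel_measurable M"
        using IHL[of m k] IHD[of m] by measurable
    qed
    show ?thesis unfolding e using s A[of k k] by measurable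
  qed
  have L: "(\<lambda>x. CL (A x) i k) \<in> borel_measurable M" for i
  proof (cases "k = 0 \<or> i = k \<or> \<not> k < i")
    case True
    then have "(\<lambda>x. CL (A x) i k) = (\<lambda>x. if k = 0 then 0 else if i = k then 1 else 0)"
      by (auto simp: CL_zero CL_diag CL_upper)
    then show ?thesis by simp
  next
    case False
    then have e: "(\<lambda>x. CL (A x) i k) = (\<lambda>x. (A x i k - (\<Sum>m\<in>{1..<k}. CL (A x) i m * CD (A x) m * CL (A x) k m)) / CD (A x) k)"
      by (subst CL.simps) auto
    have s: "(\<lambda>x. \<Sum>m\<in>{1..<k}. CL (A x) i m * CD (A x) m * CL (A x) k m) \<in> borel_measurable M"
    proof (rule borel_measurable_sum)
      fix m assume "m \<in> {1..<k}"
      then have "m < k" by simp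
      then show "(\<lambda>x. CL (A x) i m * CD (A x) m * CL (A x) k m) \<in> borel_measurable M"
        using IHL[of m i] IHL[of m k] IHD[of m] by measurable
    qed
    show ?thesis unfolding e using s A[of i k] D by measurable
  qed
  show ?case using L D by blast
qed

context gbset
begin

abbreviation "Mz \<equiv> PiM I (\<lambda>_. lborel :: real measure)"

lemma free_lebesgue_eq: "free_lebesgue V E \<sigma> = Mz"
  by (simp add: free_lebesgue_def)

lemma omega_meas: "(\<lambda>x. omega_of V E \<sigma> x a b) \<in> borel_measurable Mz"
  unfolding omega_of_def by (cases "(max a b, min a b) \<in> I") (simp_all add: meas_coord)

lemma CD_omega_meas: "(\<lambda>x. CD (omega_of V E \<sigma> x) k) \<in> borel_measurable Mz"
  using CLD_meas[of "\<lambda>x. omega_of V E \<sigma> x", OF omega_meas] by blast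
lemma CL_omega_meas: "(\<lambda>x. CL (omega_of V E \<sigma> x) i k) \<in> borel_measurable Mz"
  using CLD_meas[of "\<lambda>x. omega_of V E \<sigma> x", OF omega_meas] by blast

lemma gw_meas: "gw_unnorm V E \<sigma> U \<delta> \<in> borel_measurable Mz"
proof -
  have pr: "Measurable.pred Mz (\<lambda>x. \<forall>k\<in>{1..p}. CD (omega_of V E \<sigma> x) k > 0)"
    by (rule pred_intros_finite) (use CD_omega_meas in measurable)
  have f1: "(\<lambda>x. \<Prod>k=1..p. CD (omega_of V E \<sigma> x) k powr (\<delta> k / 2)) \<in> borel_measurable Mz"
    by (rule borel_measurable_prod) (use CD_omega_meas in measurable)
  have f2: "(\<lambda>x. \<Sum>i=1..p. \<Sum>j=1..p. omega_of V E \<sigma> x i j * U j i) \<in> borel_measurable Mz"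
    using omega_meas by measurable
  have "(\<lambda>x. gw_unnorm V E \<sigma> U \<delta> x) \<in> borel_measurable Mz"
    unfolding gw_alt using pr f1 f2 by measurable
  then show ?thesis by simp
qed

lemma LD_meas: "LD_coords V E \<sigma> \<in> measurable Mz Mz"
proof -
  have pr: "Measurable.pred Mz (\<lambda>x. \<forall>k\<in>{1..p}. CD (omega_of V E \<sigma> x) k > 0)"
    by (rule pred_intros_finite) (use CD_omega_meas in measurable)
  have g: "LDgood \<in> measurable Mz Mz"
    unfolding LDgood_def
  proof (rule measurable_restrict)
    fix c :: "nat \<times> nat" assume "c \<in> I"
    obtain i j where c: "c = (i, j)" by (cases c)
    have "(\<lambda>x. if j < i then RL p (omega_of V E \<sigma> x) i j else Dtilde (RD p (omega_of V E \<sigma> x)) i) \<in> borel_measurable Mz"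
      unfolding RL_def RD_def Dtilde_def using CD_omega_meas CL_omega_meas by measurable
    then show "(\<lambda>x. case c of (i, j) \<Rightarrow> if j < i then RL p (omega_of V E \<sigma> x) i j else Dtilde (RD p (omega_of V E \<sigma> x)) i) \<in> measurable Mz lborel"
      using c by simp
  qed
  have b: "(\<lambda>x. LDbad) \<in> measurable Mz Mz"
    by (rule measurable_const) (auto simp: LDbad_def space_PiM)
  have "(\<lambda>x. if \<forall>k\<in>{1..p}. CD (omega_of V E \<sigma> x) k > 0 then LDgood x else LDbad) \<in> measurable Mz Mz"
    using pr g b by measurable
  then show ?thesis unfolding LD_alt[symmetric] by simp
qed

lemma ZL_z_meas: "(\<lambda>z. ZL ed z i k) \<in> borel_measurable Mz"
  using ZL_meas[of "\<lambda>z. z" Mz, OF meas_coord] by simp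
lemma ZD_z_meas: "(\<lambda>z. ZD ed z k) \<in> borel_measurable Mz"
  using ZD_meas[of "\<lambda>z. z" Mz, OF meas_coord] by simp

lemma PhiX_meas: "PhiX \<in> measurable Mz Mz"
proof -
  have "(\<lambda>z. restrict (\<lambda>c. Xv z c) I) \<in> measurable Mz Mz"
  proof (rule measurable_restrict)
    fix c :: "nat \<times> nat" assume "c \<in> I"
    obtain a b where c: "c = (a, b)" by (cases c)
    have "(\<lambda>z. \<Sum>k=1..b. ZL ed z a k * ZD ed z k * ZL ed z b k) \<in> borel_measurable Mz"
      using ZL_z_meas ZD_z_meas by measurable
    then show "(\<lambda>z. Xv z c) \<in> measurable Mz lborel" by (simp add: Xv_def c)
  qed
  moreover have "PhiX = (\<lambda>z. restrict (\<lambda>c. Xv z c) I)" by (rule ext) (simp add: PhiX_def)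
  ultimately show ?thesis by simp
qed

end

context gbset
begin

definition al :: "(nat \<times> nat \<Rightarrow> real) \<Rightarrow> nat \<times> nat \<Rightarrow> real" where
  "al z c = (case c of (a, b) \<Rightarrow> \<Sum>m\<in>{1..<b}. ZL ed z a m * ZD ed z m * ZL ed z b m)"
definition be0 :: "(nat \<times> nat \<Rightarrow> real) \<Rightarrow> nat \<times> nat \<Rightarrow> real" where
  "be0 z c = (case c of (a, b) \<Rightarrow> if a = b then ZD ed z (b - 1) else ZD ed z b)"
definition be :: "(nat \<times> nat \<Rightarrow> real) \<Rightarrow> nat \<times> nat \<Rightarrow> real" where
  "be z c = (if be0 z c = 0 then 1 else be0 z c)"
definition rk :: "nat \<times> nat \<Rightarrow> nat" where
  "rk c = (case c of (a, b) \<Rightarrow> b * (p + 1) + (if a = b then 0 else a))"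
definition Jac :: "(nat \<times> nat \<Rightarrow> real) \<Rightarrow> real" where
  "Jac z = (\<Prod>c\<in>I. \<bar>be0 z c\<bar>)"

lemma rk_col:
  assumes c: "(a, b) \<in> I" and d: "(a', b') \<in> I" and le: "rk (a, b) \<le> rk (a', b')"
  shows "b \<le> b'"
proof (rule ccontr)
  assume "\<not> b \<le> b'"
  then have "Suc b' \<le> b" by simp
  then have "Suc b' * (p + 1) \<le> b * (p + 1)" by (rule mult_le_mono1)
  moreover have "a' \<le> p" using d I_iff by auto
  ultimately have "rk (a', b') < rk (a, b)" by (auto simp: rk_def)
  then show False using le by simp
qed

lemma rk_inj: "inj_on rk I"
proof (rule inj_onI)
  fix c d assume c: "c \<in> I" and d: "d \<in> I" and e: "rk c = rk d"
  obtain a b where cc: "c = (a, b)" by (cases c)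
  obtain a' b' where dd: "d = (a', b')" by (cases d)
  have "b = b'" using rk_col[of a b a' b'] rk_col[of a' b' a b] c d e cc dd by auto
  then have "(if a = b then 0 else a) = (if a' = b then 0 else a')" using e cc dd by (simp add: rk_def)
  moreover have "a \<ge> 1" "a' \<ge> 1" using c d cc dd I_iff by auto
  ultimately have "a = a'" by (auto split: if_splits)
  then show "c = d" using cc dd \<open>b = b'\<close> by simp
qed

lemma rk_lt: "c \<in> I \<Longrightarrow> rk c < (p + 1) * (p + 1)"
proof -
  assume c: "c \<in> I"
  obtain a b where cc: "c = (a, b)" by (cases c)
  have "a \<le> p" "b \<le> p" using c cc I_iff by auto
  then have "b * (p + 1) + a < (p + 1) * (p + 1)"
    by (metis add_less_le_mono le_imp_less_Suc mult_le_mono1 mult_Suc add.commute plus_1_eq_Suc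
      less_add_same_cancel2 add_Suc_right add_le_cancel_left le_add2)
  then show ?thesis using cc by (auto simp: rk_def)
qed

lemma ia:
  assumes c: "c \<in> I" and d: "d \<in> I" and le: "rk c \<le> rk d"
  shows "al (y(d:=t)) c = al y c"
proof -
  obtain a b where cc: "c = (a, b)" by (cases c)
  obtain a' b' where dd: "d = (a', b')" by (cases d)
  have bb: "b \<le> b'" using rk_col c d le cc dd by blast
  have L: "ZL ed (y(d:=t)) i m = ZL ed y i m" if "m < b" for i m
    by (rule ZL_dep[where j="b - 1"]) (use that bb dd in auto)
  have D: "ZD ed (y(d:=t)) m = ZD ed y m" if "m < b" for m
    by (rule ZD_dep) (use that bb dd in auto)
  show ?thesis using L D by (auto simp: al_def cc intro!: sum.cong)
qed

lemma ib0:
  assumes c: "c \<in> I" and d: "d \<in> I" and le: "rk c \<le> rk d"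
  shows "be0 (y(d:=t)) c = be0 y c"
proof -
  obtain a b where cc: "c = (a, b)" by (cases c)
  obtain a' b' where dd: "d = (a', b')" by (cases d)
  have bb: "b \<le> b'" using rk_col c d le cc dd by blast
  show ?thesis
  proof (cases "a = b")
    case True
    have "ZD ed (y(d:=t)) (b - 1) = ZD ed y (b - 1)"
      by (rule ZD_dep) (use bb dd in auto)
    then show ?thesis using True by (simp add: be0_def cc)
  next
    case False
    have "d \<noteq> (l, l)" if "1 \<le> l" "l \<le> b" for l
    proof
      assume "d = (l, l)"
      then have "l = b" using bb dd that by auto
      then have "rk d = b * (p + 1)" using \<open>d = (l, l)\<close> by (simp add: rk_def)
      moreover have "a \<ge> 1" using c cc I_iff by auto
      ultimately show False using le False by (simp add: rk_def cc)
    qed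
    then have "ZD ed (y(d:=t)) b = ZD ed y b"
      by (intro ZD_dep) auto
    then show ?thesis using False by (simp add: be0_def cc)
  qed
qed

lemma ib: "c \<in> I \<Longrightarrow> d \<in> I \<Longrightarrow> rk c \<le> rk d \<Longrightarrow> be (y(d:=t)) c = be y c"
  using ib0 by (simp add: be_def)

lemma be_nz: "be z c \<noteq> 0" by (simp add: be_def)

lemma al_meas: "(\<lambda>z. al z c) \<in> borel_measurable Mz"
proof -
  obtain a b where cc: "c = (a, b)" by (cases c)
  show ?thesis unfolding al_def cc using ZL_z_meas ZD_z_meas by simp measurable
qed

lemma be0_meas: "(\<lambda>z. be0 z c) \<in> borel_measurable Mz"
proof -
  obtain a b where cc: "c = (a, b)" by (cases c)
  show ?thesis unfolding be0_def cc using ZD_z_meas by simp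
qed

lemma be_meas: "(\<lambda>z. be z c) \<in> borel_measurable Mz"
  unfolding be_def using be0_meas by measurable

lemma Jac_meas: "Jac \<in> borel_measurable Mz"
proof -
  have "(\<lambda>z. \<Prod>c\<in>I. \<bar>be0 z c\<bar>) \<in> borel_measurable Mz"
    by (rule borel_measurable_prod) (use be0_meas in measurable)
  then show ?thesis by (simp add: Jac_def[abs_def])
qed

lemma good_Phi:
  assumes z: "z \<in> space Mz" and nz: "\<forall>l\<in>{1..p}. z (l, l) \<noteq> 0"
  shows "PhiR I rk ((p+1)*(p+1)) al be z = PhiX z" "JR I rk ((p+1)*(p+1)) be z = Jac z"
proof -
  have b0: "be0 z c \<noteq> 0" if "c \<in> I" for c
  proof -
    obtain a b where cc: "c = (a, b)" by (cases c)
    have "b \<le> p" using that cc I_iff by auto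
    then show ?thesis using ZD_nz[OF nz] by (auto simp: be0_def cc)
  qed
  then have bb: "be z c = be0 z c" if "c \<in> I" for c using that by (simp add: be_def)
  have ext: "z c = undefined" if "c \<notin> I" for c
    using z that by (cases c) (auto simp: space_PiM PiE_def extensional_def)
  show "PhiR I rk ((p+1)*(p+1)) al be z = PhiX z"
  proof
    fix c
    show "PhiR I rk ((p+1)*(p+1)) al be z c = PhiX z c"
    proof (cases "c \<in> I")
      case False then show ?thesis by (simp add: PhiR_def PhiX_def ext)
    next
      case True
      obtain a b where cc: "c = (a, b)" by (cases c)
      have ab: "a \<in> {1..p}" "b \<in> {1..p}" "b \<le> a" "a = b \<or> ed a b" using True cc I_iff by auto
      have "al z c + be0 z c * z c = Xv z c"
      proof (cases "a = b")
        case True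
        have "ZD ed z b = ZD ed z (b - 1) * z (b, b)" using ZD_Suc[of ed z "b - 1"] ab by simp
        then show ?thesis using True ab sum_last[of b "\<lambda>k. ZL ed z b k * ZD ed z k * ZL ed z b k"]
          by (simp add: al_def be0_def Xv_def cc ZL_diag)
      next
        case False
        then have "ed a b" "b < a" using ab by auto
        then have "ZL ed z a b = z (a, b)" using ab by (simp add: ZL_edge)
        then show ?thesis using False ab sum_last[of b "\<lambda>k. ZL ed z a k * ZD ed z k * ZL ed z b k"]
          by (simp add: al_def be0_def Xv_def cc ZL_diag mult_ac)
      qed
      then show ?thesis using True rk_lt[OF True] bb[OF True] by (simp add: PhiR_def PhiX_def)
    qed
  qed
  show "JR I rk ((p+1)*(p+1)) be z = Jac z"
  proof -
    have "{c \<in> I. rk c < (p+1)*(p+1)} = I" using rk_lt by auto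
    then show ?thesis using bb by (simp add: JR_def Jac_def)
  qed
qed

end

context gbset
begin

definition Zc where "Zc U \<delta> = (\<integral>\<^sup>+x. ennreal (gw_unnorm V E \<sigma> U \<delta> x) \<partial>Mz)"
definition Gz where "Gz U \<delta> z = (if \<forall>l\<in>{1..p}. z (l, l) > 0 then gw_unnorm V E \<sigma> U \<delta> (PhiX z) * Jac z else 0)"

lemma gw_nonneg: "gw_unnorm V E \<sigma> U \<delta> x \<ge> 0"
  unfolding gw_alt by (auto intro!: prod_nonneg mult_nonneg_nonneg)

lemma Gz_meas: "Gz U \<delta> \<in> borel_measurable Mz"
proof -
  have pr: "Measurable.pred Mz (\<lambda>z. \<forall>l\<in>{1..p}. z (l, l) > (0::real))"
    by (rule pred_intros_finite) (use meas_coord in measurable)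
  have g: "(\<lambda>z. gw_unnorm V E \<sigma> U \<delta> (PhiX z)) \<in> borel_measurable Mz"
    using measurable_compose[OF PhiX_meas gw_meas] .
  have "(\<lambda>z. if \<forall>l\<in>{1..p}. z (l, l) > 0 then gw_unnorm V E \<sigma> U \<delta> (PhiX z) * Jac z else 0) \<in> borel_measurable Mz"
    using pr g Jac_meas by measurable
  then show ?thesis by (simp add: Gz_def[abs_def])
qed

lemma distr_eq:
  assumes Z0: "Zc U \<delta> \<noteq> 0" and Zi: "Zc U \<delta> \<noteq> \<infinity>"
  shows "distr (gen_G_wishart V E \<sigma> U \<delta>) Mz (LD_coords V E \<sigma>) =
     density Mz (\<lambda>z. ennreal (Gz U \<delta> z / enn2real (Zc U \<delta>)))"
proof -
  define K0 where "K0 = enn2real (Zc U \<delta>)"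
  have K0: "K0 > 0" "Zc U \<delta> = ennreal K0" using Z0 Zi
    by (auto simp: K0_def enn2real_positive_iff less_top ennreal_enn2real_if zero_less_iff_neq_zero)
  let ?gw = "gw_unnorm V E \<sigma> U \<delta>"
  have gen: "gen_G_wishart V E \<sigma> U \<delta> = density Mz (\<lambda>x. ennreal (?gw x / K0))"
  proof -
    have "(\<lambda>x. ennreal (?gw x) / (\<integral>\<^sup>+ y. ennreal (?gw y) \<partial>Mz)) = (\<lambda>x. ennreal (?gw x / K0))"
      using K0 gw_nonneg by (auto simp: Zc_def divide_ennreal intro!: ext)
    then show ?thesis by (simp add: gen_G_wishart_def free_lebesgue_eq)
  qed
  have fm: "(\<lambda>x. ennreal (?gw x / K0)) \<in> borel_measurable Mz" using gw_meas by measurable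
  have LDm: "LD_coords V E \<sigma> \<in> measurable (density Mz (\<lambda>x. ennreal (?gw x / K0))) Mz"
    using LD_meas by (simp cong: measurable_cong_sets)
  have gm: "(\<lambda>z. ennreal (Gz U \<delta> z / K0)) \<in> borel_measurable Mz" using Gz_meas by measurable
  show ?thesis unfolding gen K0_def[symmetric]
  proof (rule measure_eqI)
    show "sets (distr (density Mz (\<lambda>x. ennreal (?gw x / K0))) Mz (LD_coords V E \<sigma>)) =
          sets (density Mz (\<lambda>z. ennreal (Gz U \<delta> z / K0)))" by simp
  next
    fix A assume "A \<in> sets (distr (density Mz (\<lambda>x. ennreal (?gw x / K0))) Mz (LD_coords V E \<sigma>))"
    then have A: "A \<in> sets Mz" by simp
    define F where "F x = ennreal (?gw x / K0) * indicator A (LD_coords V E \<sigma> x)" for x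
    have Fm: "F \<in> borel_measurable Mz" unfolding F_def
      using fm measurable_compose[OF LD_meas borel_measurable_indicator[OF A]] by measurable
    have pre: "LD_coords V E \<sigma> -` A \<inter> space Mz \<in> sets Mz"
      using measurable_sets[OF LD_meas A] .
    have "emeasure (distr (density Mz (\<lambda>x. ennreal (?gw x / K0))) Mz (LD_coords V E \<sigma>)) A =
        emeasure (density Mz (\<lambda>x. ennreal (?gw x / K0))) (LD_coords V E \<sigma> -` A \<inter> space Mz)"
      using emeasure_distr[OF LDm A] by simp
    also have "\<dots> = (\<integral>\<^sup>+x. ennreal (?gw x / K0) * indicator (LD_coords V E \<sigma> -` A \<inter> space Mz) x \<partial>Mz)"
      by (rule emeasure_density[OF fm pre])
    also have "\<dots> = (\<integral>\<^sup>+x. F x \<partial>Mz)"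
      by (rule nn_integral_cong) (auto simp: F_def indicator_def)
    also have "\<dots> = (\<integral>\<^sup>+z. F (PhiR I rk ((p+1)*(p+1)) al be z) * ennreal (JR I rk ((p+1)*(p+1)) be z) \<partial>Mz)"
      by (rule chain[OF finite_I rk_inj Fm al_meas be_meas ia ib be_nz])
    also have "\<dots> = (\<integral>\<^sup>+z. ennreal (Gz U \<delta> z / K0) * indicator A z \<partial>Mz)"
    proof (rule nn_integral_cong_AE)
      have ae: "AE z in Mz. \<forall>l\<in>{1..p}. z (l, l) \<noteq> 0"
      proof (rule eventually_ball_finite)
        show "\<forall>l\<in>{1..p}. AE z in Mz. z (l, l) \<noteq> 0"
          using AE_coord_nz[OF finite_I] I_iff by auto
      qed simp
      show "AE z in Mz. F (PhiR I rk ((p+1)*(p+1)) al be z) * ennreal (JR I rk ((p+1)*(p+1)) be z) =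
          ennreal (Gz U \<delta> z / K0) * indicator A z"
        using ae
      proof (rule AE_mp[OF _ AE_I2[OF impI]])
        fix z assume z: "z \<in> space Mz" and nz: "\<forall>l\<in>{1..p}. z (l, l) \<noteq> 0"
        show "F (PhiR I rk ((p+1)*(p+1)) al be z) * ennreal (JR I rk ((p+1)*(p+1)) be z) =
          ennreal (Gz U \<delta> z / K0) * indicator A z"
        proof (cases "\<forall>l\<in>{1..p}. z (l, l) > 0")
          case True
          have J0: "Jac z \<ge> 0" by (simp add: Jac_def prod_nonneg)
          have "F (PhiX z) * ennreal (Jac z) = ennreal (?gw (PhiX z) / K0) * ennreal (Jac z) * indicator A z"
            using LD_PhiX[OF z True] by (simp add: F_def mult_ac)
          also have "\<dots> = ennreal (Gz U \<delta> z / K0) * indicator A z"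
            using True J0 K0 gw_nonneg by (simp add: Gz_def ennreal_mult'[symmetric] divide_nonneg_pos mult_ac)
          finally show ?thesis using good_Phi[OF z nz] by simp
        next
          case False
          then show ?thesis using good_Phi[OF z nz] gw_PhiX_neg[OF nz False] by (simp add: F_def Gz_def)
        qed
      qed
    qed
    also have "\<dots> = emeasure (density Mz (\<lambda>z. ennreal (Gz U \<delta> z / K0))) A"
      by (rule emeasure_density[OF gm A, symmetric])
    finally show "emeasure (distr (density Mz (\<lambda>x. ennreal (?gw x / K0))) Mz (LD_coords V E \<sigma>)) A =
       emeasure (density Mz (\<lambda>z. ennreal (Gz U \<delta> z / K0))) A" .
  qed
qed

end

definition aff :: "(real \<Rightarrow> real) \<Rightarrow> bool" where
  "aff f \<longleftrightarrow> (\<exists>\<alpha> \<beta>. \<forall>t. f t = \<alpha> + \<beta> * t)"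

lemma aff_const: "aff (\<lambda>t. c)" unfolding aff_def by (rule exI[of _ c], rule exI[of _ 0]) simp
lemma aff_const': "(\<And>t. f t = c) \<Longrightarrow> aff f"
proof -
  assume "\<And>t. f t = c"
  then have "f = (\<lambda>t. c)" by (rule ext)
  then show ?thesis using aff_const by simp
qed
lemma aff_id: "aff (\<lambda>t. t)" unfolding aff_def by (rule exI[of _ 0], rule exI[of _ 1]) simp
lemma aff_add: "aff f \<Longrightarrow> aff g \<Longrightarrow> aff (\<lambda>t. f t + g t)"
proof -
  assume "aff f" "aff g"
  then obtain a1 b1 a2 b2 where "\<forall>t. f t = a1 + b1 * t" "\<forall>t. g t = a2 + b2 * t" unfolding aff_def by blast
  then show ?thesis unfolding aff_def
    by (intro exI[of _ "a1 + a2"] exI[of _ "b1 + b2"]) (simp add: algebra_simps)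
qed
lemma aff_cmult: "aff f \<Longrightarrow> aff (\<lambda>t. c * f t)"
proof -
  assume "aff f"
  then obtain a1 b1 where "\<forall>t. f t = a1 + b1 * t" unfolding aff_def by blast
  then show ?thesis unfolding aff_def
    by (intro exI[of _ "c * a1"] exI[of _ "c * b1"]) (simp add: algebra_simps)
qed
lemma aff_multc: "aff f \<Longrightarrow> aff (\<lambda>t. f t * c)"
  using aff_cmult[of f c] by (simp add: mult.commute)
lemma aff_sum: "finite S \<Longrightarrow> (\<And>m. m \<in> S \<Longrightarrow> aff (f m)) \<Longrightarrow> aff (\<lambda>t. \<Sum>m\<in>S. f m t)"
  by (induction S rule: finite_induct) (auto intro: aff_add aff_const')
lemma aff_divc: "aff f \<Longrightarrow> aff (\<lambda>t. f t / c)"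
  using aff_multc[of f "1/c"] by simp
lemma aff_uminus: "aff f \<Longrightarrow> aff (\<lambda>t. - f t)"
  using aff_cmult[of f "-1"] by simp

lemma Q_rewrite:
  fixes L U :: "nat \<Rightarrow> nat \<Rightarrow> real" and D :: "nat \<Rightarrow> real"
  shows "(\<Sum>i=1..p. \<Sum>j=1..p. (\<Sum>k=1..p. L i k * D k * L j k) * U j i) =
         (\<Sum>k=1..p. D k * (\<Sum>i=1..p. \<Sum>j=1..p. L i k * U j i * L j k))"
proof -
  have "(\<Sum>i=1..p. \<Sum>j=1..p. (\<Sum>k=1..p. L i k * D k * L j k) * U j i) =
      (\<Sum>i=1..p. \<Sum>j=1..p. \<Sum>k=1..p. D k * (L i k * U j i * L j k))"
    by (intro sum.cong refl, subst sum_distrib_right, rule sum.cong) (simp_all add: mult_ac)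
  also have "\<dots> = (\<Sum>i=1..p. \<Sum>k=1..p. \<Sum>j=1..p. D k * (L i k * U j i * L j k))"
    by (rule sum.cong[OF refl], rule sum.swap)
  also have "\<dots> = (\<Sum>k=1..p. \<Sum>i=1..p. \<Sum>j=1..p. D k * (L i k * U j i * L j k))"
    by (rule sum.swap)
  also have "\<dots> = (\<Sum>k=1..p. D k * (\<Sum>i=1..p. \<Sum>j=1..p. L i k * U j i * L j k))"
    by (simp add: sum_distrib_left)
  finally show ?thesis .
qed

lemma sum3_split:
  fixes A B C :: "'x \<Rightarrow> 'y \<Rightarrow> real"
  shows "(\<Sum>i\<in>S. \<Sum>j\<in>T. A i j * t\<^sup>2 + B i j * t + C i j) =
     (\<Sum>i\<in>S. \<Sum>j\<in>T. A i j) * t\<^sup>2 + (\<Sum>i\<in>S. \<Sum>j\<in>T. B i j) * t + (\<Sum>i\<in>S. \<Sum>j\<in>T. C i j)"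
  by (simp only: sum.distrib sum_distrib_right)

lemma sum1_split:
  fixes A B C d :: "'x \<Rightarrow> real"
  shows "(\<Sum>k\<in>K. d k * (A k * t\<^sup>2 + B k * t + C k)) =
     (\<Sum>k\<in>K. d k * A k) * t\<^sup>2 + (\<Sum>k\<in>K. d k * B k) * t + (\<Sum>k\<in>K. d k * C k)"
  by (simp only: distrib_left sum.distrib sum_distrib_right mult.assoc)

lemma quad_expand:
  fixes a b :: "nat \<Rightarrow> nat \<Rightarrow> real" and u :: "nat \<Rightarrow> nat \<Rightarrow> real" and d :: "nat \<Rightarrow> real"
  shows "(\<Sum>k\<in>K. d k * (\<Sum>i\<in>S. \<Sum>j\<in>S. (a k i + b k i * t) * u j i * (a k j + b k j * t))) =
    (\<Sum>k\<in>K. d k * (\<Sum>i\<in>S. \<Sum>j\<in>S. b k i * u j i * b k j)) * t\<^sup>2 +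
    (\<Sum>k\<in>K. d k * (\<Sum>i\<in>S. \<Sum>j\<in>S. a k i * u j i * b k j + b k i * u j i * a k j)) * t +
    (\<Sum>k\<in>K. d k * (\<Sum>i\<in>S. \<Sum>j\<in>S. a k i * u j i * a k j))"
proof -
  have e: "(a k i + b k i * t) * u j i * (a k j + b k j * t) =
     (b k i * u j i * b k j) * t\<^sup>2 + (a k i * u j i * b k j + b k i * u j i * a k j) * t + a k i * u j i * a k j"
    for k i j by (simp add: algebra_simps power2_eq_square)
  have "(\<Sum>k\<in>K. d k * (\<Sum>i\<in>S. \<Sum>j\<in>S. (a k i + b k i * t) * u j i * (a k j + b k j * t))) =
     (\<Sum>k\<in>K. d k * ((\<Sum>i\<in>S. \<Sum>j\<in>S. b k i * u j i * b k j) * t\<^sup>2 +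
        (\<Sum>i\<in>S. \<Sum>j\<in>S. a k i * u j i * b k j + b k i * u j i * a k j) * t +
        (\<Sum>i\<in>S. \<Sum>j\<in>S. a k i * u j i * a k j)))"
    by (simp only: e sum3_split)
  then show ?thesis by (simp only: sum1_split)
qed
lemma quad_nonneg: "sym_pd p U \<Longrightarrow> (\<Sum>i=1..p. \<Sum>j=1..p. v i * U j i * v j) \<ge> 0"
proof -
  assume U: "sym_pd p U"
  have e: "(\<Sum>i=1..p. \<Sum>j=1..p. v i * U j i * v j) = quad p U v"
    using U unfolding quad_def sym_pd_def by (auto intro!: sum.cong)
  show ?thesis
  proof (cases "\<exists>i\<in>{1..p}. v i \<noteq> 0")
    case True then show ?thesis using sym_pd_quad[OF U True] e by simp
  next
    case False then show ?thesis by (simp add: e quad_def)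
  qed
qed

lemma quad_pos: "sym_pd p U \<Longrightarrow> i \<in> {1..p} \<Longrightarrow> v i \<noteq> 0 \<Longrightarrow> (\<Sum>i=1..p. \<Sum>j=1..p. v i * U j i * v j) > 0"
proof -
  assume U: "sym_pd p U" and i: "i \<in> {1..p}" "v i \<noteq> 0"
  have e: "(\<Sum>i=1..p. \<Sum>j=1..p. v i * U j i * v j) = quad p U v"
    using U unfolding quad_def sym_pd_def by (auto intro!: sum.cong)
  have "\<exists>i\<in>{1..p}. v i \<noteq> 0" using i by blast
  then show ?thesis using sym_pd_quad[OF U] e by auto
qed

lemma quad_unit:
  fixes p i0 :: nat and U :: "nat \<Rightarrow> nat \<Rightarrow> real"
  assumes "i0 \<in> {1..p}"
  shows "(\<Sum>i=1..p. \<Sum>j=1..p. (if i = i0 then 1 else 0) * U j i * (if j = i0 then (1::real) else 0)) = U i0 i0"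
proof -
  have e: "(if i = i0 then 1 else 0) * U j i * (if j = i0 then (1::real) else 0) =
     (if j = i0 then (if i = i0 then U i0 i0 else 0) else 0)" for i j by auto
  have "(\<Sum>i=1..p. \<Sum>j=1..p. (if i = i0 then 1 else 0) * U j i * (if j = i0 then (1::real) else 0)) =
      (\<Sum>i=1..p. (if i = i0 then U i0 i0 else 0))"
  proof (rule sum.cong[OF refl])
    fix i
    show "(\<Sum>j=1..p. (if i = i0 then 1 else 0) * U j i * (if j = i0 then (1::real) else 0)) = (if i = i0 then U i0 i0 else 0)"
    proof (cases "i = i0")
      case True then show ?thesis unfolding e using assms by simp
    next
      case False then show ?thesis unfolding e by simp
    qed
  qed
  also have "\<dots> = U i0 i0" using assms by simp
  finally show ?thesis .
qed

context gbset
begin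

lemma ZL_affine:
  assumes c0: "c0 = (i0, j0)" "c0 \<in> I" "j0 < i0"
  shows "a \<in> {1..p} \<Longrightarrow> aff (\<lambda>t. ZL ed (y(c0 := t)) a b)"
proof (induction b arbitrary: a rule: less_induct)
  case (less b)
  have j0: "1 \<le> j0" "i0 \<le> p" using c0 I_iff by auto
  show ?case
  proof (cases "b = 0 \<or> a = b \<or> a < b")
    case True
    then show ?thesis by (intro aff_const'[where c="if b = 0 then 0 else if a = b then 1 else 0"])
      (auto simp: ZL_col0 ZL_diag ZL_upper)
  next
    case False
    then have ba: "1 \<le> b" "b < a" by auto
    show ?thesis
    proof (cases "ed a b")
      case True
      then have e: "(\<lambda>t. ZL ed (y(c0 := t)) a b) = (\<lambda>t. (y(c0 := t)) (a, b))" using ba by (simp add: ZL_edge)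
      show ?thesis unfolding e by (cases "(a, b) = c0") (simp_all add: aff_id aff_const)
    next
      case ne: False
      have D: "ZD ed (y(c0 := t)) m = ZD ed y m" for t m
        by (rule ZD_dep) (use c0 in auto)
      have e: "(\<lambda>t. ZL ed (y(c0 := t)) a b) =
        (\<lambda>t. - (\<Sum>m\<in>{1..<b}. ZL ed (y(c0 := t)) a m * ZD ed y m * ZL ed (y(c0 := t)) b m) / ZD ed y b)"
        using ba ne D by (auto simp: ZL_nonedge intro!: ext)
      have trm: "aff (\<lambda>t. ZL ed (y(c0 := t)) a m * ZD ed y m * ZL ed (y(c0 := t)) b m)" if m: "m \<in> {1..<b}" for m
      proof -
        have mb: "m < b" "a \<in> {1..p}" "b \<in> {1..p}" using m less.prems ba by auto
        have ma: "aff (\<lambda>t. ZL ed (y(c0 := t)) a m)" "aff (\<lambda>t. ZL ed (y(c0 := t)) b m)"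
          using less.IH[OF mb(1) mb(2)] less.IH[OF mb(1) mb(3)] by (simp_all add: fun_upd_def)
        have constprod: "aff (\<lambda>t. f t * ZD ed y m * g t)" if "aff g" "\<And>t. f t = cc" for f g cc
          using aff_cmult[OF that(1), of "cc * ZD ed y m"] that(2) by (simp add: mult_ac)
        have constprod2: "aff (\<lambda>t. f t * ZD ed y m * g t)" if "aff f" "\<And>t. g t = cc" for f g cc
          using aff_multc[OF that(1), of "ZD ed y m * cc"] that(2) by (simp add: mult_ac)
        show ?thesis
        proof (cases "(\<exists>t1. ZL ed (y(c0 := t1)) a m \<noteq> 0) \<and> (\<exists>t2. ZL ed (y(c0 := t2)) b m \<noteq> 0)")
          case False
          then have "(\<forall>t1. ZL ed (y(c0 := t1)) a m = 0) \<or> (\<forall>t2. ZL ed (y(c0 := t2)) b m = 0)" by blast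
          then show ?thesis
          proof
            assume "\<forall>t1. ZL ed (y(c0 := t1)) a m = 0"
            then show ?thesis by (intro aff_const'[where c=0]) auto
          next
            assume "\<forall>t2. ZL ed (y(c0 := t2)) b m = 0"
            then show ?thesis by (intro aff_const'[where c=0]) auto
          qed
        next
          case True
          then obtain t1 t2 where t: "ZL ed (y(c0 := t1)) a m \<noteq> 0" "ZL ed (y(c0 := t2)) b m \<noteq> 0" by blast
          have "ed a m \<or> ed b m"
            by (rule gb_pair[OF _ _ _ _ ne t]) (use m ba less.prems in auto)
          then show ?thesis
          proof
            assume em: "ed a m"
            show ?thesis
            proof (cases "(a, m) = c0")
              case False
              have "ZL ed (y(c0 := t)) a m = y (a, m)" for t
                using em m ba False by (simp add: ZL_edge)
              then show ?thesis by (rule constprod[OF ma(2)])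
            next
              case True
              then have am: "a = i0" "m = j0" using c0 by auto
              have "ZL ed (y(c0 := t)) b m = ZL ed y b m" for t
                by (rule ZL_dep2) (use am c0 ba in auto)
              then show ?thesis by (rule constprod2[OF ma(1)])
            qed
          next
            assume em: "ed b m"
            show ?thesis
            proof (cases "(b, m) = c0")
              case False
              have "ZL ed (y(c0 := t)) b m = y (b, m)" for t
                using em m ba False by (simp add: ZL_edge)
              then show ?thesis by (rule constprod2[OF ma(1)])
            next
              case True
              then have am: "b = i0" "m = j0" using c0 by auto
              have "ZL ed (y(c0 := t)) a m = ZL ed y a m" for t
                by (rule ZL_dep2) (use am c0 ba in auto)
              then show ?thesis by (rule constprod[OF ma(2)])
            qed
          qed
        qed
      qed
      show ?thesis unfolding e
        by (intro aff_divc aff_uminus aff_sum) (use trm in auto)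
    qed
  qed
qed

end

lemma complete_square:
  fixes A B C t :: real
  assumes "A > 0"
  shows "exp (- (1/2) * (A * t\<^sup>2 + B * t + C)) =
    exp (- (1/2) * (C - B\<^sup>2 / (4 * A))) * exp (- ((t - (- B / (2 * A)))\<^sup>2) / (2 * (1 / A)))"
proof -
  have "- (1/2) * (A * t\<^sup>2 + B * t + C) = - (1/2) * (C - B\<^sup>2 / (4 * A)) + - ((t - (- B / (2 * A)))\<^sup>2) / (2 * (1 / A))"
    using assms by (simp add: field_simps power2_eq_square)
  then show ?thesis by (simp add: exp_add[symmetric])
qed

context gbset
begin

lemma Jac_nonneg: "Jac z \<ge> 0" by (simp add: Jac_def prod_nonneg)

lemma Gz_pos_form:
  assumes pos: "\<forall>l\<in>{1..p}. z (l, l) > 0"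
  shows "Gz U \<delta> z = (\<Prod>k=1..p. ZD ed z k powr (\<delta> k / 2)) * Jac z *
     exp (- (1/2) * (\<Sum>k=1..p. ZD ed z k * (\<Sum>i=1..p. \<Sum>j=1..p. ZL ed z i k * U j i * ZL ed z j k)))"
proof -
  have "Gz U \<delta> z = gw_unnorm V E \<sigma> U \<delta> (PhiX z) * Jac z" using pos by (simp add: Gz_def)
  also have "\<dots> = (\<Prod>k=1..p. ZD ed z k powr (\<delta> k / 2)) *
     exp (- (1/2) * (\<Sum>i=1..p. \<Sum>j=1..p. (\<Sum>k=1..p. ZL ed z i k * ZD ed z k * ZL ed z j k) * U j i)) * Jac z"
    by (simp only: gw_PhiX_pos[OF pos])
  also have "\<dots> = (\<Prod>k=1..p. ZD ed z k powr (\<delta> k / 2)) *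
     exp (- (1/2) * (\<Sum>k=1..p. ZD ed z k * (\<Sum>i=1..p. \<Sum>j=1..p. ZL ed z i k * U j i * ZL ed z j k))) * Jac z"
    by (simp only: Q_rewrite[where p=p and L="ZL ed z" and D="ZD ed z" and U=U])
  finally show ?thesis by (simp only: mult_ac)
qed

lemma L_line:
  assumes U: "sym_pd p U" and c0: "c0 = (i0, j0)" "c0 \<in> I" "j0 < i0"
  shows "\<exists>\<mu> s c. s > 0 \<and> c \<ge> 0 \<and> (\<forall>t. Gz U \<delta> (y(c0 := t)) = c * exp (- ((t - \<mu>)\<^sup>2) / (2 * s)))"
proof -
  have ij: "i0 \<in> {1..p}" "j0 \<in> {1..p}" "ed i0 j0" using c0 I_iff by auto
  have diag: "(y(c0 := t)) (l, l) = y (l, l)" for t l using c0 by auto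
  show ?thesis
  proof (cases "\<forall>l\<in>{1..p}. y (l, l) > 0")
    case False
    have np: "\<not> (\<forall>l\<in>{1..p}. (y(c0 := t)) (l, l) > 0)" for t using False diag by metis
    have "Gz U \<delta> (y(c0 := t)) = 0" for t unfolding Gz_def using np[of t] by (simp only: if_False)
    then show ?thesis by (intro exI[of _ 0] exI[of _ 1] exI[of _ 0]) simp
  next
    case pos: True
    have post: "\<forall>l\<in>{1..p}. (y(c0 := t)) (l, l) > 0" for t using pos diag by simp
    have D: "ZD ed (y(c0 := t)) k = ZD ed y k" for t k by (rule ZD_dep) (use c0 in auto)
    have J: "Jac (y(c0 := t)) = Jac y" for t unfolding Jac_def be0_def D by (rule refl)
    have "\<forall>k i. \<exists>\<alpha> \<beta>. i \<in> {1..p} \<longrightarrow> (\<forall>t. ZL ed (y(c0 := t)) i k = \<alpha> + \<beta> * t)"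
      using ZL_affine[OF c0] unfolding aff_def by blast
    then obtain A B where AB: "\<And>k i t. i \<in> {1..p} \<Longrightarrow> ZL ed (y(c0 := t)) i k = A k i + B k i * t"
      by metis
    have Bj0: "B j0 i = (if i = i0 then 1 else 0)" if i: "i \<in> {1..p}" for i
    proof -
      have col: "ZL ed (y(c0 := t)) i j0 = (if i = i0 then t else ZL ed y i j0)" for t
      proof (cases "i = i0")
        case True then show ?thesis using ij c0 by (simp add: ZL_edge)
      next
        case False
        show ?thesis by (simp add: False, rule ZL_dep2) (use False c0 in auto)
      qed
      have "A j0 i + B j0 i * 0 = (if i = i0 then 0 else ZL ed y i j0)"
           "A j0 i + B j0 i * 1 = (if i = i0 then 1 else ZL ed y i j0)"
        using AB[OF i, where k=j0 and t=0] AB[OF i, where k=j0 and t=1] col[of 0] col[of 1] by auto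
      then show ?thesis by (auto split: if_splits)
    qed
    define Aq where "Aq = (\<Sum>k=1..p. ZD ed y k * (\<Sum>i=1..p. \<Sum>j=1..p. B k i * U j i * B k j))"
    define Bq where "Bq = (\<Sum>k=1..p. ZD ed y k * (\<Sum>i=1..p. \<Sum>j=1..p. A k i * U j i * B k j + B k i * U j i * A k j))"
    define Cq where "Cq = (\<Sum>k=1..p. ZD ed y k * (\<Sum>i=1..p. \<Sum>j=1..p. A k i * U j i * A k j))"
    have Q: "(\<Sum>k=1..p. ZD ed (y(c0 := t)) k * (\<Sum>i=1..p. \<Sum>j=1..p. ZL ed (y(c0 := t)) i k * U j i * ZL ed (y(c0 := t)) j k))
        = Aq * t\<^sup>2 + Bq * t + Cq" for t
    proof -
      have "(\<Sum>k=1..p. ZD ed (y(c0 := t)) k * (\<Sum>i=1..p. \<Sum>j=1..p. ZL ed (y(c0 := t)) i k * U j i * ZL ed (y(c0 := t)) j k))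
          = (\<Sum>k=1..p. ZD ed y k * (\<Sum>i=1..p. \<Sum>j=1..p. (A k i + B k i * t) * U j i * (A k j + B k j * t)))"
        by (intro sum.cong refl arg_cong2[where f="(*)"]) (simp_all add: D AB)
      also have "\<dots> = Aq * t\<^sup>2 + Bq * t + Cq"
        unfolding Aq_def Bq_def Cq_def by (rule quad_expand)
      finally show ?thesis .
    qed
    have Aq: "Aq > 0"
    proof -
      have nn: "0 \<le> ZD ed y k * (\<Sum>i=1..p. \<Sum>j=1..p. B k i * U j i * B k j)" if "k \<in> {1..p}" for k
        using ZD_pos[OF pos, of k ed] that quad_nonneg[OF U, of "B k"] by (simp add: mult_nonneg_nonneg)
      have "(\<Sum>i=1..p. \<Sum>j=1..p. B j0 i * U j i * B j0 j) =
          (\<Sum>i=1..p. \<Sum>j=1..p. (if i = i0 then 1 else 0) * U j i * (if j = i0 then (1::real) else 0))"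
        by (intro sum.cong refl) (simp add: Bj0)
      also have "\<dots> > 0"
        using quad_pos[OF U ij(1), of "\<lambda>i. if i = i0 then 1 else 0"] by simp
      finally have "0 < ZD ed y j0 * (\<Sum>i=1..p. \<Sum>j=1..p. B j0 i * U j i * B j0 j)"
        using ZD_pos[OF pos, of j0 ed] ij by simp
      then show ?thesis unfolding Aq_def
        by (intro sum_pos2[of "{1..p}" j0]) (use ij nn in auto)
    qed
    define C0 where "C0 = (\<Prod>k=1..p. ZD ed y k powr (\<delta> k / 2)) * Jac y"
    have C0: "C0 \<ge> 0" unfolding C0_def using Jac_nonneg by (simp add: prod_nonneg)
    show ?thesis
    proof (intro exI conjI allI)
      show "1 / Aq > 0" using Aq by simp
      show "C0 * exp (- (1/2) * (Cq - Bq\<^sup>2 / (4 * Aq))) \<ge> 0" using C0 by simp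
      fix t
      have "Gz U \<delta> (y(c0 := t)) = (\<Prod>k=1..p. ZD ed (y(c0 := t)) k powr (\<delta> k / 2)) * Jac (y(c0 := t)) *
        exp (- (1/2) * (\<Sum>k=1..p. ZD ed (y(c0 := t)) k * (\<Sum>i=1..p. \<Sum>j=1..p. ZL ed (y(c0 := t)) i k * U j i * ZL ed (y(c0 := t)) j k)))"
        by (rule Gz_pos_form[OF post])
      also have "\<dots> = C0 * exp (- (1/2) * (Aq * t\<^sup>2 + Bq * t + Cq))"
        by (subst Q) (simp only: C0_def J D)
      also have "\<dots> = C0 * (exp (- (1/2) * (Cq - Bq\<^sup>2 / (4 * Aq))) * exp (- ((t - (- Bq / (2 * Aq)))\<^sup>2) / (2 * (1 / Aq))))"
        by (simp only: complete_square[OF Aq])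
      finally show "Gz U \<delta> (y(c0 := t)) = C0 * exp (- (1/2) * (Cq - Bq\<^sup>2 / (4 * Aq))) * exp (- ((t - (- Bq / (2 * Aq)))\<^sup>2) / (2 * (1 / Aq)))"
        by (simp only: mult.assoc)
    qed
  qed
qed

end

definition gi :: "(real \<Rightarrow> real) \<Rightarrow> bool" where
  "gi f \<longleftrightarrow> (\<exists>\<alpha> \<beta>. \<forall>t>0. f t = \<alpha> + \<beta> / t)"

lemma gi_const': "(\<And>t. t > 0 \<Longrightarrow> f t = c) \<Longrightarrow> gi f"
  unfolding gi_def by (rule exI[of _ c], rule exI[of _ 0]) simp
lemma gi_cong: "(\<And>t. t > 0 \<Longrightarrow> f t = g t) \<Longrightarrow> gi g \<Longrightarrow> gi f"
  unfolding gi_def by metis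
lemma gi_add: "gi f \<Longrightarrow> gi g \<Longrightarrow> gi (\<lambda>t. f t + g t)"
proof -
  assume "gi f" "gi g"
  then obtain a1 b1 a2 b2 where "\<forall>t>0. f t = a1 + b1 / t" "\<forall>t>0. g t = a2 + b2 / t" unfolding gi_def by blast
  then show ?thesis unfolding gi_def
    by (intro exI[of _ "a1 + a2"] exI[of _ "b1 + b2"]) (simp add: add_divide_distrib)
qed
lemma gi_cmult: "gi f \<Longrightarrow> gi (\<lambda>t. c * f t)"
proof -
  assume "gi f"
  then obtain a1 b1 where "\<forall>t>0. f t = a1 + b1 / t" unfolding gi_def by blast
  then show ?thesis unfolding gi_def
    by (intro exI[of _ "c * a1"] exI[of _ "c * b1"]) (simp add: algebra_simps)
qed
lemma gi_multc: "gi f \<Longrightarrow> gi (\<lambda>t. f t * c)"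
  using gi_cmult[of f c] by (simp add: mult.commute)
lemma gi_sum: "finite S \<Longrightarrow> (\<And>m. m \<in> S \<Longrightarrow> gi (f m)) \<Longrightarrow> gi (\<lambda>t. \<Sum>m\<in>S. f m t)"
  by (induction S rule: finite_induct) (auto intro: gi_add gi_const')
lemma gi_inv: "gi (\<lambda>t. c / t)"
  unfolding gi_def by (rule exI[of _ 0], rule exI[of _ c]) simp

context gbset
begin

lemma ZL_gi:
  assumes c0: "c0 = (m0, m0)" "m0 \<in> {1..p}" and oth: "\<forall>l\<in>{1..p}. l \<noteq> m0 \<longrightarrow> y (l, l) > 0"
  shows "a \<in> {1..p} \<Longrightarrow> gi (\<lambda>t. ZL ed (y(c0 := t)) a b)"
proof (induction b arbitrary: a rule: less_induct)
  case (less b)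
  define P where "P k = (\<Prod>l\<in>{1..k}-{m0}. y (l, l))" for k
  have Ppos: "P k > 0" if "k \<le> p" for k
    unfolding P_def by (rule prod_pos) (use oth that in auto)
  have ZDhi: "ZD ed (y(c0 := t)) k = t * P k" if "m0 \<le> k" for k t
  proof -
    have "m0 \<in> {1..k}" using that c0 by auto
    then have "ZD ed (y(c0 := t)) k = (y(c0 := t)) (m0, m0) * (\<Prod>l\<in>{1..k}-{m0}. (y(c0 := t)) (l, l))"
      by (simp add: ZD_prod prod.remove)
    also have "\<dots> = t * P k" using c0 by (auto simp: P_def intro!: prod.cong)
    finally show ?thesis .
  qed
  have ZDlo: "ZD ed (y(c0 := t)) k = ZD ed y k" if "k < m0" for k t
    by (rule ZD_dep) (use that c0 in auto)
  have ZLlo: "ZL ed (y(c0 := t)) i k = ZL ed y i k" if "k < m0" for i k t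
    by (rule ZL_dep[where j=k]) (use that c0 in auto)
  show ?case
  proof (cases "b < m0")
    case True
    then show ?thesis by (intro gi_const'[where c="ZL ed y a b"]) (rule ZLlo[OF True])
  next
    case bm: False
    show ?thesis
    proof (cases "b = 0 \<or> a = b \<or> a < b")
      case True
      then show ?thesis by (intro gi_const'[where c="if b = 0 then 0 else if a = b then 1 else 0"])
        (auto simp: ZL_col0 ZL_diag ZL_upper)
    next
      case False
      then have ba: "1 \<le> b" "b < a" by auto
      have bp: "b \<le> p" using ba less.prems by auto
      show ?thesis
      proof (cases "ed a b")
        case True
        have "ZL ed (y(c0 := t)) a b = y (a, b)" for t using True ba c0 by (simp add: ZL_edge)
        then show ?thesis by (intro gi_const'[where c="y (a, b)"]) blast
      next
        case ne: False
        define T where "T m t = - (ZL ed (y(c0 := t)) a m * ZD ed (y(c0 := t)) m * ZL ed (y(c0 := t)) b m) / (t * P b)" for m t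
        have e: "ZL ed (y(c0 := t)) a b = (\<Sum>m\<in>{1..<b}. T m t)" if "t > 0" for t
        proof -
          have "ZL ed (y(c0 := t)) a b = - (\<Sum>m\<in>{1..<b}. ZL ed (y(c0 := t)) a m * ZD ed (y(c0 := t)) m * ZL ed (y(c0 := t)) b m) / (t * P b)"
            using ba ne bm ZDhi[of b t] by (simp add: ZL_nonedge)
          then show ?thesis by (simp add: T_def sum_divide_distrib[symmetric] sum_negf)
        qed
        have trm: "gi (T m)" if m: "m \<in> {1..<b}" for m
        proof -
          have mb: "m < b" "a \<in> {1..p}" "b \<in> {1..p}" using m less.prems ba bp by auto
          have ma: "gi (\<lambda>t. ZL ed (y(c0 := t)) a m)" "gi (\<lambda>t. ZL ed (y(c0 := t)) b m)"
            using less.IH[OF mb(1) mb(2)] less.IH[OF mb(1) mb(3)] by (simp_all add: fun_upd_def)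
          show ?thesis
          proof (cases "m < m0")
            case True
            have Te: "T m t = (- (ZL ed y a m * ZD ed y m * ZL ed y b m) / P b) / t" if "t > 0" for t
              using True by (simp add: T_def ZLlo ZDlo)
            show ?thesis by (rule gi_cong[OF Te gi_inv])
          next
            case mm: False
            have Tm: "T m t = ZL ed (y(c0 := t)) a m * ZL ed (y(c0 := t)) b m * (- P m / P b)" if "t > 0" for t
              using that ZDhi[of m t] mm by (simp add: T_def)
            show ?thesis
            proof (cases "(\<exists>t1>0. ZL ed (y(c0 := t1)) a m \<noteq> 0) \<and> (\<exists>t2>0. ZL ed (y(c0 := t2)) b m \<noteq> 0)")
              case False
              then have "T m t = 0" if "t > 0" for t using Tm[OF that] that by auto
              then show ?thesis by (rule gi_const')
            next
              case True
              then obtain t1 t2 where t: "ZL ed (y(c0 := t1)) a m \<noteq> 0" "ZL ed (y(c0 := t2)) b m \<noteq> 0" by blast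
              have "ed a m \<or> ed b m"
                by (rule gb_pair[OF _ _ _ _ ne t]) (use m ba less.prems in auto)
              then show ?thesis
              proof
                assume em: "ed a m"
                have "ZL ed (y(c0 := t)) a m = y (a, m)" for t using em m ba c0 by (simp add: ZL_edge)
                then have Te: "T m t = (y (a, m) * (- P m / P b)) * ZL ed (y(c0 := t)) b m" if "t > 0" for t
                  using Tm[OF that] by simp
                show ?thesis by (rule gi_cong[OF Te gi_cmult[OF ma(2)]])
              next
                assume em: "ed b m"
                have "ZL ed (y(c0 := t)) b m = y (b, m)" for t using em m ba c0 by (simp add: ZL_edge)
                then have Te: "T m t = (y (b, m) * (- P m / P b)) * ZL ed (y(c0 := t)) a m" if "t > 0" for t
                  using Tm[OF that] by simp
                show ?thesis by (rule gi_cong[OF Te gi_cmult[OF ma(1)]])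
              qed
            qed
          qed
        qed
        have "gi (\<lambda>t. \<Sum>m\<in>{1..<b}. T m t)" by (rule gi_sum) (use trm in auto)
        then show ?thesis using gi_cong[where f="\<lambda>t. ZL ed (y(c0 := t)) a b" and g="\<lambda>t. \<Sum>m\<in>{1..<b}. T m t"] e by blast
      qed
    qed
  qed
qed

end

lemma ZD_hi: "c0 = (m0, m0) \<Longrightarrow> 1 \<le> m0 \<Longrightarrow> m0 \<le> k \<Longrightarrow>
   ZD ed (y(c0 := t)) k = t * (\<Prod>l\<in>{1..k}-{m0}. y (l, l))"
proof -
  assume c0: "c0 = (m0, m0)" "1 \<le> m0" "m0 \<le> k"
  have "m0 \<in> {1..k}" using c0 by auto
  then have "ZD ed (y(c0 := t)) k = (y(c0 := t)) (m0, m0) * (\<Prod>l\<in>{1..k}-{m0}. (y(c0 := t)) (l, l))"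
    by (simp add: ZD_prod prod.remove)
  also have "\<dots> = t * (\<Prod>l\<in>{1..k}-{m0}. y (l, l))" using c0 by (auto intro!: prod.cong)
  finally show ?thesis .
qed

lemma ZD_lo: "c0 = (m0, m0) \<Longrightarrow> k < m0 \<Longrightarrow> ZD ed (y(c0 := t)) k = ZD ed y k"
  by (rule ZD_dep) auto

lemma ZL_lo: "c0 = (m0, m0) \<Longrightarrow> k < m0 \<Longrightarrow> ZL ed (y(c0 := t)) i k = ZL ed y i k"
  by (rule ZL_dep[where j=k]) auto

lemma ivl_split: "m0 \<in> {1..p} \<Longrightarrow> {1..p} = {1..<m0} \<union> {m0..(p::nat)}" by auto

lemma exp_split:
  fixes X Ab Bb t :: real
  shows "exp (- (1/2) * (X + Ab * t + Bb / t)) = exp (- (1/2) * X) * exp (- (Ab/2) * t - (Bb/2) / t)"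
proof -
  have "- (1/2) * (X + Ab * t + Bb / t) = - (1/2) * X + (- (Ab/2) * t - (Bb/2) / t)" by (simp add: field_simps)
  then show ?thesis by (simp add: exp_add[symmetric])
qed

context gbset
begin

lemma D_line:
  assumes U: "sym_pd p U" and dpos: "\<forall>i\<in>{1..p}. \<delta> i > 0" and c0: "c0 = (m0, m0)" "m0 \<in> {1..p}"
  shows "\<exists>\<alpha> a b c. c \<ge> 0 \<and> a > 0 \<and> (b > 0 \<or> (b = 0 \<and> \<alpha> > -1)) \<and>
     (\<forall>t. Gz U \<delta> (y(c0 := t)) = (if t > 0 then c * t powr \<alpha> * exp (- a * t - b / t) else 0))"
proof -
  have diag: "(y(c0 := t)) (l, l) = (if l = m0 then t else y (l, l))" for t l using c0 by auto
  show ?thesis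
  proof (cases "\<forall>l\<in>{1..p}. l \<noteq> m0 \<longrightarrow> y (l, l) > 0")
    case False
    then obtain l where l: "l \<in> {1..p}" "l \<noteq> m0" "\<not> y (l, l) > 0" by blast
    have "\<not> (\<forall>l\<in>{1..p}. (y(c0 := t)) (l, l) > 0)" for t
    proof
      assume "\<forall>l\<in>{1..p}. (y(c0 := t)) (l, l) > 0"
      then have "(y(c0 := t)) (l, l) > 0" using l by blast
      then show False using diag[of t l] l by simp
    qed
    then have "Gz U \<delta> (y(c0 := t)) = 0" for t unfolding Gz_def by (simp only: if_False)
    then show ?thesis by (intro exI[of _ 0] exI[of _ 1] exI[of _ 1] exI[of _ 0]) simp
  next
    case oth: True
    have m0: "1 \<le> m0" "m0 \<le> p" using c0 by auto
    define P where "P k = (\<Prod>l\<in>{1..k}-{m0}. y (l, l))" for k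
    have Ppos: "P k > 0" if "k \<le> p" for k
      unfolding P_def by (rule prod_pos) (use oth that in auto)
    have pos_iff: "(\<forall>l\<in>{1..p}. (y(c0 := t)) (l, l) > 0) \<longleftrightarrow> t > 0" for t
    proof
      assume "\<forall>l\<in>{1..p}. (y(c0 := t)) (l, l) > 0"
      then have "(y(c0 := t)) (m0, m0) > 0" using c0 by blast
      then show "t > 0" using c0 by simp
    next
      assume "t > 0"
      then show "\<forall>l\<in>{1..p}. (y(c0 := t)) (l, l) > 0" using oth c0 by auto
    qed
    have "\<forall>k i. \<exists>\<alpha> \<beta>. i \<in> {1..p} \<longrightarrow> (\<forall>t>0. ZL ed (y(c0 := t)) i k = \<alpha> + \<beta> / t)"
      using ZL_gi[OF c0 oth] unfolding gi_def by blast
    then obtain Al Bl where AB: "\<And>k i t. i \<in> {1..p} \<Longrightarrow> t > 0 \<Longrightarrow> ZL ed (y(c0 := t)) i k = Al k i + Bl k i / t"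
      by metis
    have Al1: "Al m0 m0 = 1"
    proof -
      have "Al m0 m0 + Bl m0 m0 / 1 = 1" "Al m0 m0 + Bl m0 m0 / 2 = 1"
        using AB[of m0 1 m0] AB[of m0 2 m0] c0 ZL_diag[of m0] by auto
      then show ?thesis by simp
    qed
    define idx where "idx c = (case c of (a, b) \<Rightarrow> if a = b then b - 1 else b)" for c :: "nat \<times> nat"
    have idx_le: "idx c \<le> p" if "c \<in> I" for c using that I_iff by (cases c) (auto simp: idx_def)
    define E where "E = (\<Sum>k\<in>{m0..p}. \<delta> k / 2)"
    define N where "N = (\<Sum>c\<in>I. if m0 \<le> idx c then 1 else 0 :: nat)"
    define C1 where "C1 = (\<Prod>k\<in>{1..<m0}. ZD ed y k powr (\<delta> k / 2)) * (\<Prod>k\<in>{m0..p}. P k powr (\<delta> k / 2))"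
    define C2 where "C2 = (\<Prod>c\<in>I. if m0 \<le> idx c then P (idx c) else \<bar>ZD ed y (idx c)\<bar>)"
    define W where "W z k = (\<Sum>i=1..p. \<Sum>j=1..p. ZL ed z i k * U j i * ZL ed z j k)" for z k
    define Cc where "Cc = (\<Sum>k\<in>{1..<m0}. ZD ed y k * W y k)"
    define Ab where "Ab = (\<Sum>k\<in>{m0..p}. P k * (\<Sum>i=1..p. \<Sum>j=1..p. Al k i * U j i * Al k j))"
    define Mid where "Mid = (\<Sum>k\<in>{m0..p}. P k * (\<Sum>i=1..p. \<Sum>j=1..p. Al k i * U j i * Bl k j + Bl k i * U j i * Al k j))"
    define Bb where "Bb = (\<Sum>k\<in>{m0..p}. P k * (\<Sum>i=1..p. \<Sum>j=1..p. Bl k i * U j i * Bl k j))"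
    have split: "{1..p} = {1..<m0} \<union> {m0..p}" "{1..<m0} \<inter> {m0..p} = {}" using ivl_split[OF c0(2)] by auto
    have P1: "(\<Prod>k=1..p. ZD ed (y(c0 := t)) k powr (\<delta> k / 2)) = C1 * t powr E" if t: "t > 0" for t
    proof -
      have "(\<Prod>k=1..p. ZD ed (y(c0 := t)) k powr (\<delta> k / 2)) =
         (\<Prod>k\<in>{1..<m0}. ZD ed (y(c0 := t)) k powr (\<delta> k / 2)) * (\<Prod>k\<in>{m0..p}. ZD ed (y(c0 := t)) k powr (\<delta> k / 2))"
        unfolding split(1) by (rule prod.union_disjoint) (use split in auto)
      also have "\<dots> = (\<Prod>k\<in>{1..<m0}. ZD ed y k powr (\<delta> k / 2)) * (\<Prod>k\<in>{m0..p}. t powr (\<delta> k / 2) * P k powr (\<delta> k / 2))"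
        using ZD_lo[OF c0(1)] ZD_hi[OF c0(1) m0(1)] by (auto simp: P_def powr_mult intro!: prod.cong arg_cong2[where f="(*)"])
      also have "\<dots> = C1 * t powr E"
        using t by (simp add: prod.distrib C1_def E_def powr_sum mult_ac)
      finally show ?thesis .
    qed
    have P2: "Jac (y(c0 := t)) = C2 * t powr (real N)" if t: "t > 0" for t
    proof -
      have "Jac (y(c0 := t)) = (\<Prod>c\<in>I. \<bar>ZD ed (y(c0 := t)) (idx c)\<bar>)"
        unfolding Jac_def by (rule prod.cong) (auto simp: be0_def idx_def)
      also have "\<dots> = (\<Prod>c\<in>I. t ^ (if m0 \<le> idx c then 1 else 0) * (if m0 \<le> idx c then P (idx c) else \<bar>ZD ed y (idx c)\<bar>))"
      proof (rule prod.cong[OF refl])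
        fix c assume c: "c \<in> I"
        show "\<bar>ZD ed (y(c0 := t)) (idx c)\<bar> = t ^ (if m0 \<le> idx c then 1 else 0) * (if m0 \<le> idx c then P (idx c) else \<bar>ZD ed y (idx c)\<bar>)"
        proof (cases "m0 \<le> idx c")
          case True
          then show ?thesis using ZD_hi[OF c0(1) m0(1) True, of ed y t] Ppos[OF idx_le[OF c]] t
            by (simp add: P_def abs_mult)
        next
          case False
          then show ?thesis using ZD_lo[OF c0(1), of "idx c" ed y t] by simp
        qed
      qed
      also have "\<dots> = t ^ N * C2" by (simp add: prod.distrib power_sum N_def C2_def)
      finally show ?thesis using t by (simp add: powr_realpow mult.commute)
    qed
    have P3: "(\<Sum>k=1..p. ZD ed (y(c0 := t)) k * W (y(c0 := t)) k) = Cc + Mid + Ab * t + Bb / t" if t: "t > 0" for t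
    proof -
      have "(\<Sum>k=1..p. ZD ed (y(c0 := t)) k * W (y(c0 := t)) k) =
         (\<Sum>k\<in>{1..<m0}. ZD ed (y(c0 := t)) k * W (y(c0 := t)) k) + (\<Sum>k\<in>{m0..p}. ZD ed (y(c0 := t)) k * W (y(c0 := t)) k)"
        unfolding split(1) by (rule sum.union_disjoint) (use split in auto)
      also have "(\<Sum>k\<in>{1..<m0}. ZD ed (y(c0 := t)) k * W (y(c0 := t)) k) = Cc"
        unfolding Cc_def W_def using ZD_lo[OF c0(1)] ZL_lo[OF c0(1)] by (auto intro!: sum.cong)
      also have "(\<Sum>k\<in>{m0..p}. ZD ed (y(c0 := t)) k * W (y(c0 := t)) k) =
          (\<Sum>k\<in>{m0..p}. (t * P k) * (\<Sum>i\<in>{1..p}. \<Sum>j\<in>{1..p}. (Al k i + Bl k i * (1/t)) * U j i * (Al k j + Bl k j * (1/t))))"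
      proof (rule sum.cong[OF refl])
        fix k assume k: "k \<in> {m0..p}"
        have "ZD ed (y(c0 := t)) k = t * P k" using ZD_hi[OF c0(1) m0(1)] k by (simp add: P_def)
        moreover have "W (y(c0 := t)) k = (\<Sum>i\<in>{1..p}. \<Sum>j\<in>{1..p}. (Al k i + Bl k i * (1/t)) * U j i * (Al k j + Bl k j * (1/t)))"
          unfolding W_def by (intro sum.cong refl) (simp add: AB t)
        ultimately show "ZD ed (y(c0 := t)) k * W (y(c0 := t)) k = (t * P k) * (\<Sum>i\<in>{1..p}. \<Sum>j\<in>{1..p}. (Al k i + Bl k i * (1/t)) * U j i * (Al k j + Bl k j * (1/t)))"
          by simp
      qed
      also have "\<dots> = (\<Sum>k\<in>{m0..p}. (t * P k) * (\<Sum>i\<in>{1..p}. \<Sum>j\<in>{1..p}. Bl k i * U j i * Bl k j)) * (1/t)\<^sup>2 +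
         (\<Sum>k\<in>{m0..p}. (t * P k) * (\<Sum>i\<in>{1..p}. \<Sum>j\<in>{1..p}. Al k i * U j i * Bl k j + Bl k i * U j i * Al k j)) * (1/t) +
         (\<Sum>k\<in>{m0..p}. (t * P k) * (\<Sum>i\<in>{1..p}. \<Sum>j\<in>{1..p}. Al k i * U j i * Al k j))"
        by (rule quad_expand)
      also have "\<dots> = (t * Bb) * (1/t)\<^sup>2 + (t * Mid) * (1/t) + t * Ab"
        unfolding Ab_def Bb_def Mid_def by (simp only: sum_distrib_left mult.assoc)
      also have "\<dots> = Mid + Ab * t + Bb / t" using t by (simp add: field_simps power2_eq_square)
      finally show ?thesis by (simp only: add.assoc)
    qed
    have Ab: "Ab > 0"
    proof -
      have nn: "0 \<le> P k * (\<Sum>i=1..p. \<Sum>j=1..p. Al k i * U j i * Al k j)" if "k \<in> {m0..p}" for k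
        using Ppos[of k] that quad_nonneg[OF U, of "Al k"] by (simp add: mult_nonneg_nonneg)
      have "0 < P m0 * (\<Sum>i=1..p. \<Sum>j=1..p. Al m0 i * U j i * Al m0 j)"
        using Ppos[of m0] m0 quad_pos[OF U c0(2), of "Al m0"] Al1 by simp
      then show ?thesis unfolding Ab_def by (intro sum_pos2[of "{m0..p}" m0]) (use m0 nn in auto)
    qed
    have Bb: "Bb \<ge> 0" unfolding Bb_def
    proof (rule sum_nonneg)
      fix k assume k: "k \<in> {m0..p}"
      then have "P k \<ge> 0" using Ppos[of k] by auto
      then show "0 \<le> P k * (\<Sum>i=1..p. \<Sum>j=1..p. Bl k i * U j i * Bl k j)"
        using quad_nonneg[OF U, of "Bl k"] by simp
    qed
    have E: "E > 0" unfolding E_def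
      by (intro sum_pos2[of "{m0..p}" m0]) (use m0 dpos in \<open>auto intro: less_imp_le\<close>)
    have C1: "C1 \<ge> 0" unfolding C1_def by (simp add: prod_nonneg)
    have C2: "C2 \<ge> 0" unfolding C2_def
      by (rule prod_nonneg) (use Ppos idx_le in \<open>auto intro: less_imp_le\<close>)
    show ?thesis
    proof (intro exI conjI allI)
      show "C1 * C2 * exp (- (1/2) * (Cc + Mid)) \<ge> 0" using C1 C2 by simp
      show "Ab / 2 > 0" using Ab by simp
      show "Bb / 2 > 0 \<or> (Bb / 2 = 0 \<and> E + real N > -1)" using Bb E by auto
      fix t
      show "Gz U \<delta> (y(c0 := t)) = (if t > 0 then C1 * C2 * exp (- (1/2) * (Cc + Mid)) * t powr (E + real N) *
          exp (- (Ab / 2) * t - (Bb / 2) / t) else 0)"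
      proof (cases "t > 0")
        case False
        then have "\<not> (\<forall>l\<in>{1..p}. (y(c0 := t)) (l, l) > 0)" using pos_iff by blast
        then show ?thesis using False unfolding Gz_def by (simp only: if_False)
      next
        case True
        have post: "\<forall>l\<in>{1..p}. (y(c0 := t)) (l, l) > 0" using pos_iff True by blast
        have "Gz U \<delta> (y(c0 := t)) = (\<Prod>k=1..p. ZD ed (y(c0 := t)) k powr (\<delta> k / 2)) * Jac (y(c0 := t)) *
           exp (- (1/2) * (\<Sum>k=1..p. ZD ed (y(c0 := t)) k * W (y(c0 := t)) k))"
          unfolding W_def by (rule Gz_pos_form[OF post])
        also have "\<dots> = (C1 * t powr E) * (C2 * t powr (real N)) * exp (- (1/2) * ((Cc + Mid) + Ab * t + Bb / t))"
          by (simp only: P1[OF True] P2[OF True] P3[OF True] add.assoc)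
        also have "\<dots> = C1 * C2 * exp (- (1/2) * (Cc + Mid)) * t powr (E + real N) * exp (- (Ab / 2) * t - (Bb / 2) / t)"
          by (simp only: exp_split powr_add mult_ac)
        finally show ?thesis using True by simp
      qed
    qed
  qed
qed

end

theorem theorem3:
  fixes V :: "'a set" and E :: "'a set set" and \<sigma> :: "'a \<Rightarrow> nat"
    and U :: "nat \<Rightarrow> nat \<Rightarrow> real" and \<delta> :: "nat \<Rightarrow> real" and p :: nat
  assumes "simple_graph V E"
    and "card V = p"
    and "GB_graph V E"
    and "GB_ordering V E \<sigma>"
    and "sym_pd p U"
    and "\<forall>i\<in>{1..p}. \<delta> i > 0"
  shows "\<exists>g. g \<in> borel_measurable (free_lebesgue V E \<sigma>) \<and>
     distr (gen_G_wishart V E \<sigma> U \<delta>) (free_lebesgue V E \<sigma>) (LD_coords V E \<sigma>)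
       = density (free_lebesgue V E \<sigma>) g \<and>
     (\<forall>y\<in>space (free_lebesgue V E \<sigma>). \<forall>i j. (i, j) \<in> free_idx V E \<sigma> \<and> j < i \<longrightarrow>
        (\<exists>\<mu> s c. s > 0 \<and> c \<ge> 0 \<and>
           (\<forall>t::real. g (y((i, j) := t)) = ennreal (c * exp (- ((t - \<mu>)\<^sup>2) / (2 * s)))))) \<and>
     (\<forall>y\<in>space (free_lebesgue V E \<sigma>). \<forall>k\<in>{1..p}.
        (\<exists>\<alpha> a b c. c \<ge> 0 \<and> a > 0 \<and> (b > 0 \<or> (b = 0 \<and> \<alpha> > -1)) \<and>
           (\<forall>t::real. g (y((k, k) := t)) =
              (if t > 0 then ennreal (c * t powr \<alpha> * exp (- a * t - b / t)) else 0))))"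
proof -
  interpret gbset V E \<sigma> p
    by unfold_locales (use assms in auto)
  note U = assms(5) and dpos = assms(6)
  show ?thesis
  proof (cases "Zc U \<delta> \<noteq> 0 \<and> Zc U \<delta> \<noteq> \<infinity>")
    case True
    define K0 where "K0 = enn2real (Zc U \<delta>)"
    have K0: "K0 > 0" using True
      by (auto simp: K0_def enn2real_positive_iff less_top zero_less_iff_neq_zero)
    define g where "g z = ennreal (Gz U \<delta> z / K0)" for z
    show ?thesis
    proof (intro exI[of _ g] conjI ballI allI impI)
      show "g \<in> borel_measurable (free_lebesgue V E \<sigma>)"
        unfolding free_lebesgue_eq g_def[abs_def] using Gz_meas by measurable
      show "distr (gen_G_wishart V E \<sigma> U \<delta>) (free_lebesgue V E \<sigma>) (LD_coords V E \<sigma>) = density (free_lebesgue V E \<sigma>) g"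
        unfolding free_lebesgue_eq g_def[abs_def] K0_def using distr_eq True by blast
    next
      fix y i j assume ij: "(i, j) \<in> I \<and> j < i"
      have "\<exists>\<mu> s c. s > 0 \<and> c \<ge> 0 \<and> (\<forall>t. Gz U \<delta> (y((i, j) := t)) = c * exp (- ((t - \<mu>)\<^sup>2) / (2 * s)))"
        by (rule L_line[OF U]) (use ij in auto)
      then obtain \<mu> s c where L: "s > 0" "c \<ge> 0" "\<And>t. Gz U \<delta> (y((i, j) := t)) = c * exp (- ((t - \<mu>)\<^sup>2) / (2 * s))"
        by blast
      show "\<exists>\<mu> s c. s > 0 \<and> c \<ge> 0 \<and> (\<forall>t::real. g (y((i, j) := t)) = ennreal (c * exp (- ((t - \<mu>)\<^sup>2) / (2 * s))))"
        using L K0 by (intro exI[of _ \<mu>] exI[of _ s] exI[of _ "c / K0"]) (simp add: g_def)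
    next
      fix y k assume k: "k \<in> {1..p}"
      have "\<exists>\<alpha> a b c. c \<ge> 0 \<and> a > 0 \<and> (b > 0 \<or> (b = 0 \<and> \<alpha> > -1)) \<and>
         (\<forall>t. Gz U \<delta> (y((k, k) := t)) = (if t > 0 then c * t powr \<alpha> * exp (- a * t - b / t) else 0))"
        by (rule D_line[OF U dpos]) (use k in auto)
      then obtain \<alpha> a b c where D: "c \<ge> 0" "a > 0" "b > 0 \<or> (b = 0 \<and> \<alpha> > -1)"
        "\<And>t. Gz U \<delta> (y((k, k) := t)) = (if t > 0 then c * t powr \<alpha> * exp (- a * t - b / t) else 0)"
        by blast
      show "\<exists>\<alpha> a b c. c \<ge> 0 \<and> a > 0 \<and> (b > 0 \<or> (b = 0 \<and> \<alpha> > -1)) \<and>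
           (\<forall>t::real. g (y((k, k) := t)) = (if t > 0 then ennreal (c * t powr \<alpha> * exp (- a * t - b / t)) else 0))"
        using D K0 by (intro exI[of _ \<alpha>] exI[of _ a] exI[of _ b] exI[of _ "c / K0"]) (simp add: g_def)
    qed
  next
    case False
    let ?gw = "gw_unnorm V E \<sigma> U \<delta>"
    have gen0: "gen_G_wishart V E \<sigma> U \<delta> = density Mz (\<lambda>_. 0)"
    proof -
      have ae: "AE x in Mz. ennreal (?gw x) / Zc U \<delta> = 0"
      proof (cases "Zc U \<delta> = \<infinity>")
        case True then show ?thesis by simp
      next
        case False': False
        then have Z0: "Zc U \<delta> = 0" using False by simp
        have m: "(\<lambda>x. ennreal (?gw x)) \<in> borel_measurable Mz" using gw_meas by measurable
        have "AE x in Mz. ennreal (?gw x) = 0" using Z0 nn_integral_0_iff_AE[OF m] by (simp add: Zc_def)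
        then show ?thesis by eventually_elim (simp add: Z0)
      qed
      have m1: "(\<lambda>x. ennreal (?gw x) / Zc U \<delta>) \<in> borel_measurable Mz" using gw_meas by measurable
      have "density Mz (\<lambda>x. ennreal (?gw x) / Zc U \<delta>) = density Mz (\<lambda>_. 0)"
        by (rule density_cong[OF m1 _ ae]) simp
      then show ?thesis by (simp add: gen_G_wishart_def free_lebesgue_eq Zc_def)
    qed
    show ?thesis
    proof (intro exI[of _ "\<lambda>_. 0"] conjI ballI allI impI)
      show "(\<lambda>_. 0) \<in> borel_measurable (free_lebesgue V E \<sigma>)" by simp
      show "distr (gen_G_wishart V E \<sigma> U \<delta>) (free_lebesgue V E \<sigma>) (LD_coords V E \<sigma>) = density (free_lebesgue V E \<sigma>) (\<lambda>_. 0)"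
        unfolding gen0 free_lebesgue_eq
      proof (rule measure_eqI)
        fix A assume "A \<in> sets (distr (density Mz (\<lambda>_. 0)) Mz (LD_coords V E \<sigma>))"
        then have A: "A \<in> sets Mz" by simp
        have LDm: "LD_coords V E \<sigma> \<in> measurable (density Mz (\<lambda>_. 0)) Mz"
          using LD_meas by (simp cong: measurable_cong_sets)
        show "emeasure (distr (density Mz (\<lambda>_. 0)) Mz (LD_coords V E \<sigma>)) A = emeasure (density Mz (\<lambda>_. 0)) A"
          using emeasure_distr[OF LDm A] A measurable_sets[OF LD_meas A] by (simp add: emeasure_density)
      qed simp
    next
      fix y i j
      show "\<exists>\<mu> s c. s > 0 \<and> c \<ge> 0 \<and> (\<forall>t::real. (\<lambda>_. 0::ennreal) (y((i, j) := t)) = ennreal (c * exp (- ((t - \<mu>)\<^sup>2) / (2 * s))))"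
        by (intro exI[of _ 0] exI[of _ 1] exI[of _ 0]) simp
    next
      fix y k
      show "\<exists>\<alpha> a b c. c \<ge> 0 \<and> a > 0 \<and> (b > 0 \<or> (b = 0 \<and> \<alpha> > -1)) \<and>
           (\<forall>t::real. (\<lambda>_. 0::ennreal) (y((k, k) := t)) = (if t > 0 then ennreal (c * t powr \<alpha> * exp (- a * t - b / t)) else 0))"
        by (intro exI[of _ 0] exI[of _ 1] exI[of _ 1] exI[of _ 0]) simp
    qed
  qed
qed

end
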